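(* Let $(X,\mathcal{O}(X))$ be a measurable space, $\mathcal{A}$ a unital $C^*$-algebra and $\mathcal{H}$ a finite-dimensional Hilbert space. Let $\mathcal{I}:\mathcal{O}(X)\to CP(\mathcal{A},\mathcal{B}(\mathcal{H}))$ be a UCP instrument which is $C^*$-extreme in $I_{\mathcal{H}}(X,\mathcal{A})$, with minimal bi-dilation $(\mathcal{K},\pi,E,V)$. Then the CP sub-minimal dilation of $\mathcal{I}$ coincides with its minimal bi-dilation; that is, $\overline{\mathrm{span}}\{\pi(a)Vh:a\in\mathcal{A},h\in\mathcal{H}\}=\mathcal{K}$, so that $(\mathcal{K},\pi,E,V)$ is itself the CP sub-minimal dilation of $\mathcal{I}$.
   Context: A CP instrument is a map $\mathcal{I}$ from $\mathcal{O}(X)$ to the completely positive maps $\mathcal{A}\to\mathcal{B}(\mathcal{H})$ such that for all $a\in\mathcal{A}$, $h,k\in\mathcal{H}$, $A\mapsto\langle h,\mathcal{I}(A)(a)k\rangle$ is a countably additive complex measure; write $\mathcal{I}(A,a)=\mathcal{I}(A)(a)$. It is UCP if $\mathcal{I}(X)(1_\mathcal{A})=I_\mathcal{H}$; $I_{\mathcal{H}}(X,\mathcal{A})$ is the set of UCP instruments. $\mathcal{I}$ is $C^*$-extreme if whenever $\mathcal{I}(\cdot)=\sum_{i=1}^nT_i^*\mathcal{I}_i(\cdot)T_i$ with $\mathcal{I}_i\in I_{\mathcal{H}}(X,\mathcal{A})$ and invertible $T_i$, $\sum T_i^*T_i=I_\mathcal{H}$, there are unitaries $U_i$ with $\mathcal{I}_i(\cdot)=U_i^*\mathcal{I}(\cdot)U_i$.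 A minimal bi-dilation is a quadruple $(\mathcal{K},\pi,E,V)$ with $\pi:\mathcal{A}\to\mathcal{B}(\mathcal{K})$ a unital $*$-homomorphism, $E:\mathcal{O}(X)\to\mathcal{B}(\mathcal{K})$ a spectral measure commuting with $\pi$, $V\in\mathcal{B}(\mathcal{H},\mathcal{K})$, with $\mathcal{I}(A,a)=V^*\pi(a)E(A)V$ and $\overline{\mathrm{span}}\{\pi(a)E(A)Vh\}=\mathcal{K}$. The CP sub-minimal dilation is $(\mathcal{K}_1,P_1\pi(\cdot)P_1|_{\mathcal{K}_1},P_1E(\cdot)P_1|_{\mathcal{K}_1},V)$ where $\mathcal{K}_1=\overline{\mathrm{span}}\,\pi(\mathcal{A})V\mathcal{H}$ and $P_1$ is the projection onto $\mathcal{K}_1$; it is a quadruple $(\mathcal{K}_1,\pi_1,\mu,V)$ with $\pi_1$ a unital $*$-homomorphism, $\mu$ a normalized POVM commuting with $\pi_1$, $\mathcal{I}(A,a)=V^*\pi_1(a)\mu(A)V$ and $\overline{\mathrm{span}}\,\pi_1(\mathcal{A})V\mathcal{H}=\mathcal{K}_1$. *)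

theory Defs
  imports "HOL-Analysis.Analysis"
begin

class cvector = ab_group_add +
  fixes cscale :: "complex \<Rightarrow> 'a \<Rightarrow> 'a" (infixr \<open>*\<^sub>C\<close> 75)
  assumes cscale_add_right: "c *\<^sub>C (x + y) = c *\<^sub>C x + c *\<^sub>C y"
    and cscale_add_left: "(c + d) *\<^sub>C x = c *\<^sub>C x + d *\<^sub>C x"
    and cscale_cscale: "c *\<^sub>C (d *\<^sub>C x) = (c * d) *\<^sub>C x"
    and cscale_one: "1 *\<^sub>C x = x"

text \<open>Inner product: conjugate-linear in the first, linear in the second argument.\<close>
class cinner_space = cvector +
  fixes cinner :: "'a \<Rightarrow> 'a \<Rightarrow> complex"
  assumes cinner_conj: "cinner x y = cnj (cinner y x)"
    and cinner_add_right: "cinner x (y + z) = cinner x y + cinner x z"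
    and cinner_cscale_right: "cinner x (c *\<^sub>C y) = c * cinner x y"
    and cinner_nonneg: "Im (cinner x x) = 0 \<and> 0 \<le> Re (cinner x x)"
    and cinner_zero_iff: "cinner x x = 0 \<longleftrightarrow> x = 0"

definition cnorm :: "'a::cinner_space \<Rightarrow> real" where
  "cnorm x = sqrt (Re (cinner x x))"

class chilbert = cinner_space +
  assumes chilbert_complete:
    "(\<forall>e>0. \<exists>N::nat. \<forall>m\<ge>N. \<forall>n\<ge>N. sqrt (Re (cinner (X m - X n) (X m - X n))) < e)
       \<Longrightarrow> (\<exists>L. \<forall>e>0. \<exists>N::nat. \<forall>n\<ge>N. sqrt (Re (cinner (X n - L) (X n - L))) < e)"

definition lin_span :: "'a::cvector set \<Rightarrow> 'a set" where
  "lin_span S = {\<Sum>i<(n::nat). c i *\<^sub>C v i | n c v. \<forall>i<n. v i \<in> S}"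

definition norm_closure :: "'a::cinner_space set \<Rightarrow> 'a set" where
  "norm_closure S = {x. \<forall>e>0. \<exists>y\<in>S. cnorm (x - y) < e}"

definition finite_dim :: "'a::cvector itself \<Rightarrow> bool" where
  "finite_dim _ \<longleftrightarrow> (\<exists>B::'a set. finite B \<and> lin_span B = UNIV)"

definition clinear :: "('a::cvector \<Rightarrow> 'b::cvector) \<Rightarrow> bool" where
  "clinear f \<longleftrightarrow> (\<forall>x y. f (x + y) = f x + f y) \<and> (\<forall>c x. f (c *\<^sub>C x) = c *\<^sub>C f x)"

definition bounded_clinear :: "('a::cinner_space \<Rightarrow> 'b::cinner_space) \<Rightarrow> bool" where
  "bounded_clinear T \<longleftrightarrow> clinear T \<and> (\<exists>K. \<forall>x. cnorm (T x) \<le> K * cnorm x)"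

definition adj :: "('a::cinner_space \<Rightarrow> 'b::cinner_space) \<Rightarrow> 'b \<Rightarrow> 'a" where
  "adj T = (SOME S. \<forall>x y. cinner (T x) y = cinner x (S y))"

definition invertible_op :: "('a::cinner_space \<Rightarrow> 'a) \<Rightarrow> bool" where
  "invertible_op T \<longleftrightarrow> bounded_clinear T \<and>
     (\<exists>S. bounded_clinear S \<and> S \<circ> T = id \<and> T \<circ> S = id)"

definition unitary_op :: "('a::chilbert \<Rightarrow> 'a) \<Rightarrow> bool" where
  "unitary_op U \<longleftrightarrow> bounded_clinear U \<and> adj U \<circ> U = id \<and> U \<circ> adj U = id"

definition orth_proj :: "('a::chilbert \<Rightarrow> 'a) \<Rightarrow> bool" where
  "orth_proj P \<longleftrightarrow> bounded_clinear P \<and> P \<circ> P = P \<and> adj P = P"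

definition cnonneg :: "complex \<Rightarrow> bool" where
  "cnonneg z \<longleftrightarrow> Im z = 0 \<and> 0 \<le> Re z"

text \<open>A unital C*-algebra: complex Banach algebra with unit, involution \<open>cstar\<close>,
  and the C*-identity. (The zero algebra is allowed.)\<close>
class cstar_algebra = cvector + ring + monoid_mult +
  fixes cstar :: "'a \<Rightarrow> 'a"
    and anorm :: "'a \<Rightarrow> real"
  assumes cscale_mult_left: "(c *\<^sub>C a) * b = c *\<^sub>C (a * b)"
    and cscale_mult_right: "a * (c *\<^sub>C b) = c *\<^sub>C (a * b)"
    and anorm_nonneg: "0 \<le> anorm a"
    and anorm_zero_iff: "anorm a = 0 \<longleftrightarrow> a = 0"
    and anorm_triangle: "anorm (a + b) \<le> anorm a + anorm b"
    and anorm_cscale: "anorm (c *\<^sub>C a) = cmod c * anorm a"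
    and anorm_mult: "anorm (a * b) \<le> anorm a * anorm b"
    and anorm_complete:
      "(\<forall>e>0. \<exists>N::nat. \<forall>m\<ge>N. \<forall>n\<ge>N. anorm (X m - X n) < e)
         \<Longrightarrow> (\<exists>L. \<forall>e>0. \<exists>N::nat. \<forall>n\<ge>N. anorm (X n - L) < e)"
    and cstar_cstar: "cstar (cstar a) = a"
    and cstar_add: "cstar (a + b) = cstar a + cstar b"
    and cstar_cscale: "cstar (c *\<^sub>C a) = cnj c *\<^sub>C cstar a"
    and cstar_mult: "cstar (a * b) = cstar b * cstar a"
    and cstar_identity: "anorm (cstar a * a) = anorm a ^ 2"

text \<open>Completely positive map \<open>\<A> \<rightarrow> B(\<H>)\<close>: linear, bounded-operator valued, and for every
  \<open>n\<close> the amplification \<open>\<phi>\<^sub>n\<close> maps each positive element \<open>B\<^sup>*B\<close> of \<open>M\<^sub>n(\<A>)\<close> to a positive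
  operator on \<open>\<H>\<^sup>n\<close>.\<close>
definition cp_map :: "('a::cstar_algebra \<Rightarrow> 'h::chilbert \<Rightarrow> 'h) \<Rightarrow> bool" where
  "cp_map \<phi> \<longleftrightarrow>
     (\<forall>a b. \<phi> (a + b) = (\<lambda>x. \<phi> a x + \<phi> b x)) \<and>
     (\<forall>c a. \<phi> (c *\<^sub>C a) = (\<lambda>x. c *\<^sub>C \<phi> a x)) \<and>
     (\<forall>a. bounded_clinear (\<phi> a)) \<and>
     (\<forall>(n::nat) (B::nat \<Rightarrow> nat \<Rightarrow> 'a) (x::nat \<Rightarrow> 'h).
        cnonneg (\<Sum>i<n. \<Sum>j<n. cinner (x i) (\<phi> (\<Sum>k<n. cstar (B k i) * B k j) (x j))))"

definition countably_additive_c :: "'x measure \<Rightarrow> ('x set \<Rightarrow> complex) \<Rightarrow> bool" where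
  "countably_additive_c M \<mu> \<longleftrightarrow>
     (\<forall>F::nat \<Rightarrow> 'x set. range F \<subseteq> sets M \<longrightarrow> disjoint_family F \<longrightarrow>
        (\<lambda>n. \<mu> (F n)) sums \<mu> (\<Union>n. F n))"

definition cp_instrument ::
  "'x measure \<Rightarrow> ('x set \<Rightarrow> 'a::cstar_algebra \<Rightarrow> 'h::chilbert \<Rightarrow> 'h) \<Rightarrow> bool" where
  "cp_instrument M \<I> \<longleftrightarrow>
     (\<forall>A\<in>sets M. cp_map (\<I> A)) \<and>
     (\<forall>a h k. countably_additive_c M (\<lambda>A. cinner h (\<I> A a k)))"

definition ucp_instrument ::
  "'x measure \<Rightarrow> ('x set \<Rightarrow> 'a::cstar_algebra \<Rightarrow> 'h::chilbert \<Rightarrow> 'h) \<Rightarrow> bool" where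
  "ucp_instrument M \<I> \<longleftrightarrow> cp_instrument M \<I> \<and> \<I> (space M) 1 = id"

text \<open>C*-extreme points of \<open>I\<^sub>\<H>(X,\<A>)\<close>; instruments are compared on measurable sets.\<close>
definition cstar_extreme_instrument ::
  "'x measure \<Rightarrow> ('x set \<Rightarrow> 'a::cstar_algebra \<Rightarrow> 'h::chilbert \<Rightarrow> 'h) \<Rightarrow> bool" where
  "cstar_extreme_instrument M \<I> \<longleftrightarrow> ucp_instrument M \<I> \<and>
     (\<forall>(n::nat) (J::nat \<Rightarrow> 'x set \<Rightarrow> 'a \<Rightarrow> 'h \<Rightarrow> 'h) (T::nat \<Rightarrow> 'h \<Rightarrow> 'h).
        (\<forall>i<n. ucp_instrument M (J i) \<and> invertible_op (T i)) \<longrightarrow>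
        (\<forall>x. (\<Sum>i<n. adj (T i) (T i x)) = x) \<longrightarrow>
        (\<forall>A\<in>sets M. \<forall>a. \<I> A a = (\<lambda>x. \<Sum>i<n. adj (T i) (J i A a (T i x)))) \<longrightarrow>
        (\<exists>U::nat \<Rightarrow> 'h \<Rightarrow> 'h. \<forall>i<n. unitary_op (U i) \<and>
            (\<forall>A\<in>sets M. \<forall>a. J i A a = adj (U i) \<circ> \<I> A a \<circ> U i)))"

definition unital_star_hom :: "('a::cstar_algebra \<Rightarrow> 'k::chilbert \<Rightarrow> 'k) \<Rightarrow> bool" where
  "unital_star_hom \<pi> \<longleftrightarrow>
     (\<forall>a. bounded_clinear (\<pi> a)) \<and>
     (\<forall>a b. \<pi> (a + b) = (\<lambda>x. \<pi> a x + \<pi> b x)) \<and>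
     (\<forall>c a. \<pi> (c *\<^sub>C a) = (\<lambda>x. c *\<^sub>C \<pi> a x)) \<and>
     (\<forall>a b. \<pi> (a * b) = \<pi> a \<circ> \<pi> b) \<and>
     (\<forall>a. \<pi> (cstar a) = adj (\<pi> a)) \<and>
     \<pi> 1 = id"

definition spectral_measure :: "'x measure \<Rightarrow> ('x set \<Rightarrow> 'k::chilbert \<Rightarrow> 'k) \<Rightarrow> bool" where
  "spectral_measure M E \<longleftrightarrow>
     (\<forall>A\<in>sets M. orth_proj (E A)) \<and> E (space M) = id \<and>
     (\<forall>h k. countably_additive_c M (\<lambda>A. cinner h (E A k)))"

definition minimal_bi_dilation ::
  "'x measure \<Rightarrow> ('x set \<Rightarrow> 'a::cstar_algebra \<Rightarrow> 'h::chilbert \<Rightarrow> 'h)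
     \<Rightarrow> ('a \<Rightarrow> 'k::chilbert \<Rightarrow> 'k) \<Rightarrow> ('x set \<Rightarrow> 'k \<Rightarrow> 'k) \<Rightarrow> ('h \<Rightarrow> 'k) \<Rightarrow> bool" where
  "minimal_bi_dilation M \<I> \<pi> E V \<longleftrightarrow>
     unital_star_hom \<pi> \<and> spectral_measure M E \<and> bounded_clinear V \<and>
     (\<forall>A\<in>sets M. \<forall>a. \<pi> a \<circ> E A = E A \<circ> \<pi> a) \<and>
     (\<forall>A\<in>sets M. \<forall>a. \<I> A a = adj V \<circ> \<pi> a \<circ> E A \<circ> V) \<and>
     norm_closure (lin_span {\<pi> a (E A (V h)) | a A h. A \<in> sets M}) = UNIV"

end

theory Submission
  imports Defs
begin

lemma cscale_zero_left[simp]: "0 *\<^sub>C (x::'a::cvector) = 0"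
  using cscale_add_left[of 0 0 x] by simp
lemma cscale_zero_right[simp]: "c *\<^sub>C (0::'a::cvector) = 0"
  using cscale_add_right[of c 0 0] by simp
lemma cscale_minus_right: "c *\<^sub>C (- (x::'a::cvector)) = - (c *\<^sub>C x)"
proof -
  have "c *\<^sub>C (- x) + c *\<^sub>C x = 0" by (simp only: cscale_add_right[symmetric] add.left_inverse cscale_zero_right)
  then show ?thesis by (simp add: eq_neg_iff_add_eq_0)
qed
lemma cscale_minus_left: "(- c) *\<^sub>C (x::'a::cvector) = - (c *\<^sub>C x)"
proof -
  have "(- c) *\<^sub>C x + c *\<^sub>C x = 0" by (simp only: cscale_add_left[symmetric] add.left_inverse cscale_zero_left)
  then show ?thesis by (simp add: eq_neg_iff_add_eq_0)
qed
lemma cscale_diff_right: "c *\<^sub>C ((x::'a::cvector) - y) = c *\<^sub>C x - c *\<^sub>C y"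
  by (metis diff_conv_add_uminus cscale_add_right cscale_minus_right)
lemma cscale_diff_left: "(c - d) *\<^sub>C (x::'a::cvector) = c *\<^sub>C x - d *\<^sub>C x"
  using cscale_add_left[of "c - d" d x] by (simp add: eq_diff_eq)
lemma cscale_sum_right: "c *\<^sub>C (\<Sum>i\<in>S. (f i::'a::cvector)) = (\<Sum>i\<in>S. c *\<^sub>C f i)"
  by (induction S rule: infinite_finite_induct) (auto simp: cscale_add_right)
lemma cscale_sum_left: "(\<Sum>i\<in>S. f i) *\<^sub>C (x::'a::cvector) = (\<Sum>i\<in>S. f i *\<^sub>C x)"
  by (induction S rule: infinite_finite_induct) (auto simp: cscale_add_left)

lemma cinner_add_left: "cinner ((x::'a::cinner_space) + y) z = cinner x z + cinner y z"
  by (metis cinner_add_right cinner_conj complex_cnj_add)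
lemma cinner_cscale_left: "cinner (c *\<^sub>C (x::'a::cinner_space)) y = cnj c * cinner x y"
  by (metis cinner_cscale_right cinner_conj complex_cnj_mult)
lemma cinner_zero_right[simp]: "cinner x (0::'a::cinner_space) = 0"
  by (metis cinner_cscale_right cscale_zero_left mult_zero_left)
lemma cinner_zero_left[simp]: "cinner (0::'a::cinner_space) x = 0"
  by (metis cinner_conj cinner_zero_right complex_cnj_zero)
lemma cinner_minus_right: "cinner x (- (y::'a::cinner_space)) = - cinner x y"
proof -
  have "cinner x (- y) + cinner x y = 0" by (simp only: cinner_add_right[symmetric] add.left_inverse cinner_zero_right)
  then show ?thesis by (simp add: eq_neg_iff_add_eq_0)
qed
lemma cinner_minus_left: "cinner (- (x::'a::cinner_space)) y = - cinner x y"
  by (metis cinner_conj cinner_minus_right complex_cnj_minus)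
lemma cinner_diff_right: "cinner x ((y::'a::cinner_space) - z) = cinner x y - cinner x z"
  by (metis diff_conv_add_uminus cinner_add_right cinner_minus_right)
lemma cinner_diff_left: "cinner ((x::'a::cinner_space) - y) z = cinner x z - cinner y z"
  by (metis diff_conv_add_uminus cinner_add_left cinner_minus_left)
lemma cinner_sum_right: "cinner (x::'a::cinner_space) (\<Sum>i\<in>S. f i) = (\<Sum>i\<in>S. cinner x (f i))"
  by (induction S rule: infinite_finite_induct) (auto simp: cinner_add_right)
lemma cinner_sum_left: "cinner (\<Sum>i\<in>S. f i) (x::'a::cinner_space) = (\<Sum>i\<in>S. cinner (f i) x)"
  by (induction S rule: infinite_finite_induct) (auto simp: cinner_add_left)
lemma cinner_self_real: "cinner (x::'a::cinner_space) x = complex_of_real (Re (cinner x x))"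
  using cinner_nonneg[of x] by (simp add: complex_eq_iff)
lemma cinner_self_Re_nonneg: "0 \<le> Re (cinner (x::'a::cinner_space) x)" using cinner_nonneg by blast
lemma cinner_self_Im[simp]: "Im (cinner (x::'a::cinner_space) x) = 0" using cinner_nonneg by blast
lemma cinner_eq_iff: "(\<forall>z. cinner z x = cinner z y) \<longleftrightarrow> (x::'a::cinner_space) = y"
proof
  assume "\<forall>z. cinner z x = cinner z y"
  then have "cinner (x - y) (x - y) = 0" by (simp add: cinner_diff_right)
  then have "x - y = 0" using cinner_zero_iff by blast
  then show "x = y" by simp
qed simp
lemma cinner_ext: "(\<And>z. cinner z x = cinner z y) \<Longrightarrow> (x::'a::cinner_space) = y"
  using cinner_eq_iff by blast

lemma cnorm_nonneg: "0 \<le> cnorm x" using cinner_self_Re_nonneg[of x] by (simp add: cnorm_def)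
lemma cnorm_sq: "(cnorm x)^2 = Re (cinner x x)"
  using cinner_self_Re_nonneg[of x] by (simp add: cnorm_def)
lemma cinner_self_cnorm: "cinner x x = complex_of_real ((cnorm x)^2)"
  by (metis cinner_self_real cnorm_sq)
lemma cnorm_zero_iff: "cnorm x = 0 \<longleftrightarrow> x = 0"
proof -
  have "cnorm x = 0 \<longleftrightarrow> Re (cinner x x) = 0" by (simp add: cnorm_def cinner_self_Re_nonneg)
  also have "\<dots> \<longleftrightarrow> cinner x x = 0" by (simp add: complex_eq_iff)
  finally show ?thesis using cinner_zero_iff by simp
qed
lemma cnorm_zero[simp]: "cnorm 0 = 0" by (simp add: cnorm_def)
lemma cnorm_cscale: "cnorm (c *\<^sub>C x) = cmod c * cnorm x"
proof -
  have cc: "cnj c * c = complex_of_real ((cmod c)^2)" by (metis complex_norm_square mult.commute of_real_power)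
  have "cinner (c *\<^sub>C x) (c *\<^sub>C x) = (cnj c * c) * cinner x x"
    by (simp add: cinner_cscale_left cinner_cscale_right)
  then have "cinner (c *\<^sub>C x) (c *\<^sub>C x) = (cmod c)^2 * cinner x x" using cc by simp
  then have "Re (cinner (c *\<^sub>C x) (c *\<^sub>C x)) = (cmod c)^2 * Re (cinner x x)"
    by (simp del: of_real_power)
  then show ?thesis unfolding cnorm_def by (simp add: real_sqrt_mult)
qed
lemma cnorm_minus: "cnorm (- x) = cnorm x"
  by (simp add: cnorm_def cinner_minus_left cinner_minus_right)
lemma cnorm_commute: "cnorm (x - y) = cnorm (y - x)"
  by (metis cnorm_minus minus_diff_eq)

lemma cauchy_schwarz: "cmod (cinner x y) \<le> cnorm x * cnorm y"
proof (cases "y = 0")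
  case True then show ?thesis by (simp add: cnorm_nonneg)
next
  case False
  define t where "t = cinner y x / cinner y y"
  have yy: "Re (cinner y y) > 0"
    using False cinner_self_Re_nonneg cinner_zero_iff cinner_self_real
    by (metis less_eq_real_def of_real_0)
  have "0 \<le> Re (cinner (x - t *\<^sub>C y) (x - t *\<^sub>C y))" by (rule cinner_self_Re_nonneg)
  also have "cinner (x - t *\<^sub>C y) (x - t *\<^sub>C y) = cinner x x - t * cinner x y - cnj t * cinner y x + cnj t * t * cinner y y"
    by (simp add: cinner_diff_left cinner_diff_right cinner_cscale_left cinner_cscale_right algebra_simps)
  also have "\<dots> = cinner x x - cinner y x * cinner x y / cinner y y"
  proof -
    have cyy: "cnj (cinner y y) = cinner y y" by (metis cinner_conj)
    have cxy: "cnj (cinner y x) = cinner x y" by (metis cinner_conj)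
    have nz: "cinner y y \<noteq> 0" using False cinner_zero_iff by blast
    show ?thesis unfolding t_def using nz by (simp add: cyy cxy field_simps)
  qed
  finally have "Re (cinner y x * cinner x y / cinner y y) \<le> Re (cinner x x)" by simp
  moreover have "cinner y x * cinner x y = (cmod (cinner x y))^2"
    by (metis cinner_conj complex_norm_square mult.commute)
  moreover have "cinner y y = complex_of_real (Re (cinner y y))" by (rule cinner_self_real)
  ultimately have "(cmod (cinner x y))^2 / Re (cinner y y) \<le> Re (cinner x x)"
    by (metis Re_divide_of_real Re_complex_of_real of_real_power)
  then have "(cmod (cinner x y))^2 \<le> Re (cinner x x) * Re (cinner y y)"
    using yy by (simp add: divide_le_eq)
  then have "(cmod (cinner x y))^2 \<le> (cnorm x * cnorm y)^2"
    by (simp add: power_mult_distrib cnorm_sq)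
  then show ?thesis
    using cnorm_nonneg by (meson mult_nonneg_nonneg power2_le_imp_le)
qed

lemma cnorm_triangle: "cnorm (x + y) \<le> cnorm x + cnorm y"
proof -
  have "Re (cinner (x+y) (x+y)) = Re (cinner x x) + 2 * Re (cinner x y) + Re (cinner y y)"
  proof -
    have "cinner y x = cnj (cinner x y)" by (rule cinner_conj)
    then show ?thesis by (simp add: cinner_add_left cinner_add_right)
  qed
  also have "\<dots> \<le> (cnorm x)^2 + 2 * (cnorm x * cnorm y) + (cnorm y)^2"
    using cauchy_schwarz[of x y] abs_Re_le_cmod[of "cinner x y"] by (simp add: cnorm_sq)
  also have "\<dots> = (cnorm x + cnorm y)^2" by (simp add: power2_sum)
  finally have "(cnorm (x+y))^2 \<le> (cnorm x + cnorm y)^2" by (simp add: cnorm_sq)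
  then show ?thesis using cnorm_nonneg by (meson add_nonneg_nonneg power2_le_imp_le)
qed

lemma cnorm_triangle_diff: "cnorm (x - z) \<le> cnorm (x - y) + cnorm (y - z)"
  using cnorm_triangle[of "x - y" "y - z"] by simp

lemma cnorm_sum: "cnorm (\<Sum>i\<in>S. f i) \<le> (\<Sum>i\<in>S. cnorm (f i))"
  by (induction S rule: infinite_finite_induct) (auto intro: order_trans[OF cnorm_triangle])



lemma cinner_pos: "(x::'a::cinner_space) \<noteq> 0 \<Longrightarrow> 0 < Re (cinner x x)"
proof -
  assume x: "x \<noteq> 0"
  have "Re (cinner x x) \<noteq> 0"
  proof
    assume "Re (cinner x x) = 0"
    then have "cinner x x = 0" using cinner_self_real[of x] by simp
    then show False using x cinner_zero_iff by blast
  qed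
  then show ?thesis using cinner_self_Re_nonneg[of x] by linarith
qed

lemma cinner_scale_self_proj:
  fixes z m :: "'a::cinner_space"
  assumes "m \<noteq> 0"
  defines "t \<equiv> cinner m z / cinner m m"
  shows "Re (cinner (z - t *\<^sub>C m) (z - t *\<^sub>C m)) = Re (cinner z z) - (cmod (cinner m z))^2 / Re (cinner m m)"
proof -
  have cmm: "cnj (cinner m m) = cinner m m" by (metis cinner_conj)
  have czm: "cnj (cinner m z) = cinner z m" by (metis cinner_conj)
  have nz: "cinner m m \<noteq> 0" using assms cinner_zero_iff by blast
  have "cinner (z - t *\<^sub>C m) (z - t *\<^sub>C m) = cinner z z - t * cinner z m - cnj t * cinner m z + cnj t * t * cinner m m"
    by (simp add: cinner_diff_left cinner_diff_right cinner_cscale_left cinner_cscale_right algebra_simps)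
  also have "\<dots> = cinner z z - cinner z m * cinner m z / cinner m m"
    unfolding t_def using nz by (simp add: cmm czm field_simps)
  also have "cinner z m * cinner m z = complex_of_real ((cmod (cinner m z))^2)"
    by (metis czm complex_norm_square mult.commute)
  also have "cinner m m = complex_of_real (Re (cinner m m))" by (rule cinner_self_real)
  finally show ?thesis by (metis Re_divide_of_real Re_complex_of_real minus_complex.simps(1))
qed

lemma riesz:
  fixes f :: "'a::chilbert \<Rightarrow> complex"
  assumes add: "\<And>x y. f (x + y) = f x + f y"
    and sc: "\<And>c x. f (c *\<^sub>C x) = c * f x"
    and bd: "\<And>x. cmod (f x) \<le> C * cnorm x"
  shows "\<exists>w. \<forall>x. f x = cinner w x"
proof (cases "\<forall>x. f x = 0")
  case True then show ?thesis by (intro exI[of _ 0]) simp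
next
  case False
  have f0: "f 0 = 0" using sc[of 0 0] by simp
  have fminus: "f (x - y) = f x - f y" for x y
    using add[of "x - y" y] by simp
  then obtain x1 where x1: "f x1 \<noteq> 0" using False by blast
  define x0 where "x0 = (1 / f x1) *\<^sub>C x1"
  have fx0: "f x0 = 1" using x1 by (simp add: x0_def sc)
  define N where "N = {m. f m = 0}"
  define D where "D = (\<lambda>m. cnorm (x0 - m)) ` N"
  define d where "d = Inf D"
  have D_ne: "D \<noteq> {}" using f0 by (auto simp: D_def N_def)
  have D_bdd: "bdd_below D" by (auto simp: D_def intro!: bdd_belowI[of _ 0] cnorm_nonneg)
  have d_le: "d \<le> cnorm (x0 - m)" if "m \<in> N" for m
    unfolding d_def using that D_bdd by (auto simp: D_def intro!: cInf_lower)
  have d_nonneg: "0 \<le> d" using d_le[of 0] f0 D_ne D_bdd unfolding d_def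
    by (intro cInf_greatest) (auto simp: D_def cnorm_nonneg)
  have N_add: "m + m' \<in> N" if "m \<in> N" "m' \<in> N" for m m' using that add by (auto simp: N_def)
  have N_sc: "c *\<^sub>C m \<in> N" if "m \<in> N" for c m using that sc by (auto simp: N_def)
  have N_diff: "m - m' \<in> N" if "m \<in> N" "m' \<in> N" for m m' using that fminus by (auto simp: N_def)
  have "\<exists>m\<in>N. cnorm (x0 - m) < d + 1 / real (Suc n)" for n
  proof -
    have "Inf D < d + 1 / real (Suc n)" unfolding d_def by simp
    then obtain y where "y \<in> D" "y < d + 1 / real (Suc n)" using cInf_lessD[OF D_ne] by blast
    then show ?thesis by (auto simp: D_def)
  qed
  then obtain m where mN: "\<And>n. m n \<in> N" and mlt: "\<And>n. cnorm (x0 - m n) < d + 1 / real (Suc n)"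
    by metis
  have para: "(cnorm (u + v))^2 + (cnorm (u - v))^2 = 2 * (cnorm u)^2 + 2 * (cnorm v)^2" for u v :: 'a
    by (simp add: cnorm_sq cinner_add_left cinner_add_right cinner_diff_left cinner_diff_right)
  have mdiff: "(cnorm (m p - m q))^2 \<le> (4*d+2) / real (Suc p) + (4*d+2) / real (Suc q)" for p q
  proof -
    let ?u = "x0 - m p" and ?v = "x0 - m q"
    have two: "(2::complex) *\<^sub>C y = y + y" for y :: 'a
      using cscale_add_left[of 1 1 y] by (simp add: cscale_one)
    have "2 *\<^sub>C (x0 - (1/2) *\<^sub>C (m p + m q)) = 2 *\<^sub>C x0 - (2 * (1/2)) *\<^sub>C (m p + m q)"
      by (simp only: cscale_diff_right cscale_cscale)
    also have "\<dots> = x0 + x0 - (m p + m q)" by (simp add: two cscale_one)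
    also have "\<dots> = ?u + ?v" by (simp add: algebra_simps)
    finally have uv: "?u + ?v = 2 *\<^sub>C (x0 - (1/2) *\<^sub>C (m p + m q))" by simp
    have "(1/2) *\<^sub>C (m p + m q) \<in> N" by (intro N_sc N_add mN)
    then have "d \<le> cnorm (x0 - (1/2) *\<^sub>C (m p + m q))" by (rule d_le)
    then have "2 * d \<le> cnorm (?u + ?v)" by (simp add: uv cnorm_cscale)
    then have "(2 * d)^2 \<le> (cnorm (?u + ?v))^2"
      using d_nonneg by (intro power_mono) auto
    then have A: "4 * d^2 \<le> (cnorm (?u + ?v))^2" by (simp add: power_mult_distrib)
    have umv: "?u - ?v = m q - m p" by simp
    have bound: "(cnorm (x0 - m n))^2 \<le> d^2 + (2*d+1) / real (Suc n)" for n
    proof -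
      have h0: "0 \<le> cnorm (x0 - m n)" by (rule cnorm_nonneg)
      have "(cnorm (x0 - m n))^2 \<le> (d + 1 / real (Suc n))^2"
        using mlt[of n] h0 by (intro power_mono) auto
      also have "\<dots> = d^2 + (2*d + 1/real (Suc n)) * (1/real (Suc n))"
        by (simp add: power2_eq_square algebra_simps)
      also have "\<dots> \<le> d^2 + (2*d+1) * (1/real (Suc n))"
        by (intro add_left_mono mult_right_mono) auto
      finally show ?thesis by simp
    qed
    have "(cnorm (m q - m p))^2 = 2 * (cnorm ?u)^2 + 2 * (cnorm ?v)^2 - (cnorm (?u + ?v))^2"
      using para[of ?u ?v] umv by simp
    also have "\<dots> \<le> 2 * (d^2 + (2*d+1) / real (Suc p)) + 2 * (d^2 + (2*d+1) / real (Suc q)) - 4 * d^2"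
      using bound[of p] bound[of q] A by (smt (verit))
    also have "\<dots> = (4*d+2) / real (Suc p) + (4*d+2) / real (Suc q)" by (simp add: ring_distribs times_divide_eq_right add_divide_distrib)
    finally show ?thesis by (simp add: cnorm_commute)
  qed
  have cauchy: "\<forall>e>0. \<exists>Nn::nat. \<forall>p\<ge>Nn. \<forall>q\<ge>Nn. sqrt (Re (cinner (m p - m q) (m p - m q))) < e"
  proof (intro allI impI)
    fix e :: real assume e: "e > 0"
    obtain Nn :: nat where "(8*d+4) / e^2 < real Nn"
      using reals_Archimedean2 by blast
    then have Nn: "(8*d+4) / e^2 < real (Suc Nn)" by simp
    show "\<exists>Nn::nat. \<forall>p\<ge>Nn. \<forall>q\<ge>Nn. sqrt (Re (cinner (m p - m q) (m p - m q))) < e"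
    proof (intro exI allI impI)
      fix p q assume pq: "Nn \<le> p" "Nn \<le> q"
      have k: "0 < 4*d+2" using d_nonneg by simp
      have "(4*d+2) / real (Suc p) \<le> (4*d+2) / real (Suc Nn)"
        using pq k by (intro divide_left_mono) auto
      moreover have "(4*d+2) / real (Suc q) \<le> (4*d+2) / real (Suc Nn)"
        using pq k by (intro divide_left_mono) auto
      moreover have "(8*d+4) / real (Suc Nn) < e^2"
        using Nn e by (simp add: field_simps)
      moreover have "(8*d+4) / real (Suc Nn) = (4*d+2) / real (Suc Nn) + (4*d+2) / real (Suc Nn)"
        by (simp add: add_divide_distrib[symmetric])
      ultimately have "(cnorm (m p - m q))^2 < e^2" using mdiff[of p q] by linarith
      then have "cnorm (m p - m q) < e" using e by (meson abs_le_square_iff not_le less_imp_le power2_less_imp_less)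
      then show "sqrt (Re (cinner (m p - m q) (m p - m q))) < e" by (simp add: cnorm_def)
    qed
  qed
  from chilbert_complete[OF cauchy] obtain L where
    L: "\<And>e. e > 0 \<Longrightarrow> \<exists>Nn::nat. \<forall>n\<ge>Nn. cnorm (m n - L) < e" unfolding cnorm_def by blast
  have LN: "L \<in> N"
  proof -
    define C' where "C' = max C 1"
    have C': "C' > 0" by (simp add: C'_def)
    have "cmod (f L) \<le> C' * e" if e: "e > 0" for e
    proof -
      obtain n where "cnorm (m n - L) < e" using L[OF e] by blast
      then have "cnorm (L - m n) < e" by (simp add: cnorm_commute)
      moreover have "f L = - f (m n - L)" using mN[of n] fminus[of "m n" L] by (simp add: N_def)
      ultimately have "cmod (f L) \<le> C * cnorm (L - m n)"
        using bd[of "L - m n"] fminus[of L "m n"] mN[of n] by (simp add: N_def)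
      also have "\<dots> \<le> C' * cnorm (L - m n)" by (intro mult_right_mono) (auto simp: C'_def cnorm_nonneg)
      also have "\<dots> \<le> C' * e" using \<open>cnorm (L - m n) < e\<close> C' by simp
      finally show ?thesis .
    qed
    then have "cmod (f L) \<le> 0"
    proof -
      assume h: "\<And>e. e > 0 \<Longrightarrow> cmod (f L) \<le> C' * e"
      show ?thesis
      proof (rule ccontr)
        assume "\<not> cmod (f L) \<le> 0"
        then have p: "cmod (f L) > 0" by simp
        have "cmod (f L) \<le> C' * (cmod (f L) / (2 * C'))" using h[of "cmod (f L) / (2*C')"] p C' by simp
        then show False using p C' by (simp add: field_simps)
      qed
    qed
    then show ?thesis by (simp add: N_def)
  qed
  define z where "z = x0 - L"
  have fz: "f z = 1" using fminus[of x0 L] LN fx0 by (simp add: z_def N_def)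
  have z_min: "cnorm z \<le> cnorm (z - n)" if "n \<in> N" for n
  proof -
    have "cnorm z \<le> d"
    proof (rule field_le_epsilon)
      fix e :: real assume e: "0 < e"
      obtain Nn where Nn: "\<And>k. k \<ge> Nn \<Longrightarrow> cnorm (m k - L) < e/2" using L[of "e/2"] e by auto
      obtain k0 :: nat where "2 / e < real k0"
        using reals_Archimedean2 by blast
      then have k0: "2 / e < real (Suc k0)" by simp
      define k where "k = max Nn k0"
      have "1 / real (Suc k) \<le> 1 / real (Suc k0)" by (intro divide_left_mono) (auto simp: k_def)
      also have "1 / real (Suc k0) < e/2" using k0 e by (simp add: field_simps)
      finally have k1: "1 / real (Suc k) < e/2" .
      have "cnorm z \<le> cnorm (x0 - m k) + cnorm (m k - L)"
        unfolding z_def by (rule cnorm_triangle_diff)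
      also have "\<dots> < (d + 1 / real (Suc k)) + e/2" using mlt[of k] Nn[of k] by (intro add_strict_mono) (auto simp: k_def)
      finally show "cnorm z \<le> d + e" using k1 by simp
    qed
    also have "d \<le> cnorm (x0 - (L + n))" using d_le N_add[OF LN that] by blast
    finally show ?thesis by (simp add: z_def algebra_simps)
  qed
  have orth: "cinner n z = 0" if "n \<in> N" for n
  proof (cases "n = 0")
    case True then show ?thesis by simp
  next
    case False
    define t where "t = cinner n z / cinner n n"
    have "t *\<^sub>C n \<in> N" using N_sc that by blast
    then have "cnorm z \<le> cnorm (z - t *\<^sub>C n)" by (rule z_min)
    then have "(cnorm z)^2 \<le> (cnorm (z - t *\<^sub>C n))^2" using cnorm_nonneg by (intro power_mono) auto
    then have "Re (cinner z z) \<le> Re (cinner z z) - (cmod (cinner n z))^2 / Re (cinner n n)"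
      using cinner_scale_self_proj[OF False, of z] by (simp add: cnorm_sq t_def)
    then have q: "(cmod (cinner n z))^2 / Re (cinner n n) \<le> 0" by linarith
    have "Re (cinner n n) > 0" using False by (rule cinner_pos)
    then have "(cmod (cinner n z))^2 \<le> 0" using q by (simp add: divide_le_0_iff)
    then show ?thesis by simp
  qed
  have "z \<noteq> 0" using fz f0 by auto
  then have zz: "cinner z z \<noteq> 0" using cinner_zero_iff by blast
  define w where "w = (1 / cinner z z) *\<^sub>C z"
  show ?thesis
  proof (intro exI allI)
    fix x
    have "x - f x *\<^sub>C z \<in> N" using fminus sc fz by (simp add: N_def)
    then have "cinner (x - f x *\<^sub>C z) z = 0" by (rule orth)
    then have "cinner z (x - f x *\<^sub>C z) = 0" by (metis cinner_conj complex_cnj_zero)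
    then have "cinner z x = f x * cinner z z" by (simp add: cinner_diff_right cinner_cscale_right)
    moreover have "cnj (cinner z z) = cinner z z" by (metis cinner_conj)
    ultimately show "f x = cinner w x" using zz by (simp add: w_def cinner_cscale_left)
  qed
qed



lemma clinear_add: "clinear T \<Longrightarrow> T (x + y) = T x + T y" by (simp add: clinear_def)
lemma clinear_scale: "clinear T \<Longrightarrow> T (c *\<^sub>C x) = c *\<^sub>C T x" by (simp add: clinear_def)
lemma clinear_zero: "clinear T \<Longrightarrow> T 0 = 0"
  using clinear_scale[of T 0 0] by simp
lemma clinear_minus: "clinear T \<Longrightarrow> T (- x) = - T x"
  using clinear_add[of T x "- x"] clinear_zero[of T] by (simp add: eq_neg_iff_add_eq_0 add.commute)
lemma clinear_diff: "clinear T \<Longrightarrow> T (x - y) = T x - T y"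
  using clinear_add[of T "x - y" y] by (simp add: eq_diff_eq)
lemma clinear_sum: "clinear T \<Longrightarrow> T (\<Sum>i\<in>S. f i) = (\<Sum>i\<in>S. T (f i))"
  by (induction S rule: infinite_finite_induct) (auto simp: clinear_add clinear_zero)
lemma bounded_clinear_linear: "bounded_clinear T \<Longrightarrow> clinear T" by (simp add: bounded_clinear_def)
lemma bounded_clinear_bound: "bounded_clinear T \<Longrightarrow> \<exists>K\<ge>0. \<forall>x. cnorm (T x) \<le> K * cnorm x"
proof -
  assume "bounded_clinear T"
  then obtain K where K: "\<forall>x. cnorm (T x) \<le> K * cnorm x" by (auto simp: bounded_clinear_def)
  have "cnorm (T x) \<le> max K 0 * cnorm x" for x
    using K[rule_format, of x] cnorm_nonneg[of x] by (meson max.cobounded1 mult_right_mono order_trans)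
  then show ?thesis by (intro exI[of _ "max K 0"]) auto
qed

lemma adj_exists:
  fixes T :: "'a::chilbert \<Rightarrow> 'b::cinner_space"
  assumes "bounded_clinear T"
  shows "\<exists>S. \<forall>x y. cinner (T x) y = cinner x (S y)"
proof -
  obtain K where K: "\<forall>x. cnorm (T x) \<le> K * cnorm x" "K \<ge> 0" using bounded_clinear_bound[OF assms] by blast
  have lin: "clinear T" using assms by (simp add: bounded_clinear_def)
  have "\<exists>w. \<forall>x. cinner y (T x) = cinner w x" for y
  proof (rule riesz[where C = "cnorm y * K"])
    show "cinner y (T (x + x')) = cinner y (T x) + cinner y (T x')" for x x'
      by (simp add: clinear_add[OF lin] cinner_add_right)
    show "cinner y (T (c *\<^sub>C x)) = c * cinner y (T x)" for c x
      by (simp add: clinear_scale[OF lin] cinner_cscale_right)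
    show "cmod (cinner y (T x)) \<le> cnorm y * K * cnorm x" for x
    proof -
      have "cmod (cinner y (T x)) \<le> cnorm y * cnorm (T x)" by (rule cauchy_schwarz)
      also have "\<dots> \<le> cnorm y * (K * cnorm x)" using K by (intro mult_left_mono) (auto simp: cnorm_nonneg)
      finally show ?thesis by (simp add: mult.assoc)
    qed
  qed
  then obtain S where S: "\<And>y x. cinner y (T x) = cinner (S y) x" by metis
  show ?thesis
  proof (intro exI allI)
    fix x y
    show "cinner (T x) y = cinner x (S y)" using S[of y x] by (metis cinner_conj)
  qed
qed

lemma adj_eq:
  assumes "\<And>x y. cinner (T x) y = cinner x (S y)"
  shows "adj T = S"
proof -
  have ex: "\<exists>S. \<forall>x y. cinner (T x) y = cinner x (S y)" using assms by blast
  have A: "\<forall>x y. cinner (T x) y = cinner x (adj T y)"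
    unfolding adj_def by (rule someI_ex[OF ex])
  show ?thesis
  proof
    fix y
    show "adj T y = S y" using A assms by (intro cinner_ext) (metis cinner_conj)
  qed
qed

lemma adj_prop_ex:
  assumes "\<exists>S. \<forall>x y. cinner (T x) y = cinner x (S y)"
  shows "cinner (T x) y = cinner x (adj T y)"
proof -
  have "\<forall>x y. cinner (T x) y = cinner x (adj T y)"
    unfolding adj_def by (rule someI_ex[OF assms])
  then show ?thesis by blast
qed

lemma adj_prop:
  fixes T :: "'a::chilbert \<Rightarrow> 'b::cinner_space"
  assumes "bounded_clinear T"
  shows "cinner (T x) y = cinner x (adj T y)"
  by (rule adj_prop_ex[OF adj_exists[OF assms]])

lemma adj_prop':
  fixes T :: "'a::chilbert \<Rightarrow> 'b::cinner_space"
  assumes "bounded_clinear T"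
  shows "cinner (adj T y) x = cinner y (T x)"
  using adj_prop[OF assms, of x y] by (metis cinner_conj)

lemma adj_clinear:
  fixes T :: "'a::chilbert \<Rightarrow> 'b::cinner_space"
  assumes "bounded_clinear T"
  shows "clinear (adj T)"
  unfolding clinear_def
proof (intro conjI allI)
  fix y z
  show "adj T (y + z) = adj T y + adj T z"
    by (rule cinner_ext) (simp add: adj_prop[OF assms, symmetric] cinner_add_right)
next
  fix c y
  show "adj T (c *\<^sub>C y) = c *\<^sub>C adj T y"
    by (rule cinner_ext) (simp add: adj_prop[OF assms, symmetric] cinner_cscale_right)
qed

lemma adj_bounded:
  fixes T :: "'a::chilbert \<Rightarrow> 'b::cinner_space"
  assumes "bounded_clinear T"
  shows "bounded_clinear (adj T)"
proof -
  obtain K where K: "\<forall>x. cnorm (T x) \<le> K * cnorm x" "K \<ge> 0" using bounded_clinear_bound[OF assms] by blast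
  have "cnorm (adj T y) \<le> K * cnorm y" for y
  proof (cases "adj T y = 0")
    case True then show ?thesis using K by (simp add: cnorm_nonneg)
  next
    case False
    have p: "cnorm (adj T y) > 0" using False cnorm_zero_iff cnorm_nonneg by (metis less_eq_real_def)
    have "(cnorm (adj T y))^2 = Re (cinner (T (adj T y)) y)"
      by (simp add: cnorm_sq adj_prop[OF assms])
    also have "\<dots> \<le> cmod (cinner (T (adj T y)) y)" by (rule complex_Re_le_cmod)
    also have "\<dots> \<le> cnorm (T (adj T y)) * cnorm y" by (rule cauchy_schwarz)
    also have "\<dots> \<le> K * cnorm (adj T y) * cnorm y" using K by (intro mult_right_mono) (auto simp: cnorm_nonneg)
    finally have "cnorm (adj T y) * cnorm (adj T y) \<le> cnorm (adj T y) * (K * cnorm y)"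
      by (simp add: power2_eq_square algebra_simps)
    then show ?thesis using p by simp
  qed
  then show ?thesis using adj_clinear[OF assms] by (auto simp: bounded_clinear_def)
qed

lemma bounded_clinear_comp:
  assumes "bounded_clinear S" "bounded_clinear T"
  shows "bounded_clinear (S \<circ> T)"
proof -
  obtain K where K: "\<forall>x. cnorm (S x) \<le> K * cnorm x" "K \<ge> 0" using bounded_clinear_bound[OF assms(1)] by blast
  obtain L where L: "\<forall>x. cnorm (T x) \<le> L * cnorm x" "L \<ge> 0" using bounded_clinear_bound[OF assms(2)] by blast
  have "cnorm (S (T x)) \<le> (K * L) * cnorm x" for x
  proof -
    have "cnorm (S (T x)) \<le> K * cnorm (T x)" using K by blast
    also have "\<dots> \<le> K * (L * cnorm x)" using L K by (intro mult_left_mono) auto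
    finally show ?thesis by (simp add: mult.assoc)
  qed
  moreover have "clinear (S \<circ> T)" using assms by (simp add: bounded_clinear_def clinear_def)
  ultimately show ?thesis by (auto simp: bounded_clinear_def)
qed

locale pform =
  fixes B :: "'a::cvector \<Rightarrow> 'a \<Rightarrow> complex"
  assumes B_conj: "B x y = cnj (B y x)"
    and B_add_right: "B x (y + z) = B x y + B x z"
    and B_scale_right: "B x (c *\<^sub>C y) = c * B x y"
    and B_pos: "Im (B x x) = 0 \<and> 0 \<le> Re (B x x)"
    and B_zero_iff: "B x x = 0 \<longleftrightarrow> x = 0"
begin

lemma B_add_left: "B (x + y) z = B x z + B y z"
  by (metis B_add_right B_conj complex_cnj_add)
lemma B_scale_left: "B (c *\<^sub>C x) y = cnj c * B x y"
  by (metis B_scale_right B_conj complex_cnj_mult)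
lemma B_zero_right[simp]: "B x 0 = 0"
  by (metis B_scale_right cscale_zero_left mult_zero_left)
lemma B_zero_left[simp]: "B 0 x = 0"
  by (metis B_conj B_zero_right complex_cnj_zero)
lemma B_minus_right: "B x (- y) = - B x y"
proof -
  have "B x (- y) + B x y = 0" by (simp only: B_add_right[symmetric] add.left_inverse B_zero_right)
  then show ?thesis by (simp add: eq_neg_iff_add_eq_0)
qed
lemma B_minus_left: "B (- x) y = - B x y"
  by (metis B_conj B_minus_right complex_cnj_minus)
lemma B_diff_right: "B x (y - z) = B x y - B x z"
  by (metis diff_conv_add_uminus B_add_right B_minus_right)
lemma B_diff_left: "B (x - y) z = B x z - B y z"
  by (metis diff_conv_add_uminus B_add_left B_minus_left)
lemma B_sum_right: "B x (\<Sum>i\<in>S. f i) = (\<Sum>i\<in>S. B x (f i))"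
  by (induction S rule: infinite_finite_induct) (auto simp: B_add_right)
lemma B_sum_left: "B (\<Sum>i\<in>S. f i) x = (\<Sum>i\<in>S. B (f i) x)"
  by (induction S rule: infinite_finite_induct) (auto simp: B_add_left)
lemma B_self_real: "B x x = complex_of_real (Re (B x x))"
  using B_pos[of x] by (simp add: complex_eq_iff)
lemma B_pos_strict: "x \<noteq> 0 \<Longrightarrow> 0 < Re (B x x)"
proof -
  assume x: "x \<noteq> 0"
  have "Re (B x x) \<noteq> 0"
  proof
    assume "Re (B x x) = 0"
    then have "B x x = 0" using B_self_real[of x] by simp
    then show False using x B_zero_iff by blast
  qed
  then show ?thesis using B_pos[of x] by linarith
qed

definition nrm :: "'a \<Rightarrow> 'a" where
  "nrm v = (if v = 0 then 0 else complex_of_real (1 / sqrt (Re (B v v))) *\<^sub>C v)"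

lemma nrm_unit: "v \<noteq> 0 \<Longrightarrow> B (nrm v) (nrm v) = 1"
proof -
  assume v: "v \<noteq> 0"
  define r where "r = Re (B v v)"
  have r: "r > 0" using v B_pos_strict r_def by blast
  have "B (nrm v) (nrm v) = cnj (complex_of_real (1 / sqrt r)) * (complex_of_real (1 / sqrt r) * B v v)"
    by (simp only: nrm_def if_not_P[OF v] B_scale_left B_scale_right r_def mult.left_commute)
  also have "\<dots> = complex_of_real (1 / sqrt r * (1 / sqrt r * r))"
  proof -
    have bvv: "B v v = complex_of_real r" using B_self_real r_def by simp
    show ?thesis unfolding bvv by (simp only: complex_cnj_complex_of_real of_real_mult)
  qed
  also have "1 / sqrt r * (1 / sqrt r * r) = r / (sqrt r * sqrt r)" by simp
  also have "sqrt r * sqrt r = r" using r by simp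
  finally show ?thesis using r by simp
qed

lemma nrm_back: "v \<noteq> 0 \<Longrightarrow> v = complex_of_real (sqrt (Re (B v v))) *\<^sub>C nrm v"
proof -
  assume v: "v \<noteq> 0"
  have r: "Re (B v v) > 0" using v B_pos_strict by blast
  show ?thesis using v r by (simp add: nrm_def cscale_cscale of_real_mult[symmetric] cscale_one del: of_real_mult)
qed

lemma nrm_zero_iff: "nrm v = 0 \<longleftrightarrow> v = 0"
  using nrm_back nrm_def by fastforce

definition onz :: "nat \<Rightarrow> (nat \<Rightarrow> 'a) \<Rightarrow> bool" where
  "onz n g \<longleftrightarrow> (\<forall>i<n. g i = 0 \<or> B (g i) (g i) = 1) \<and> (\<forall>i<n. \<forall>j<n. i \<noteq> j \<longrightarrow> B (g i) (g j) = 0)"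

lemma onz_inner:
  assumes "onz n g" "k < n"
  shows "B (g k) (\<Sum>j<n. d j *\<^sub>C g j) = d k * B (g k) (g k)"
proof -
  have "B (g k) (\<Sum>j<n. d j *\<^sub>C g j) = (\<Sum>j<n. d j * B (g k) (g j))"
    by (simp add: B_sum_right B_scale_right)
  also have "\<dots> = d k * B (g k) (g k)"
    using assms unfolding onz_def by (subst sum.remove[of _ k]) (auto intro!: sum.neutral)
  finally show ?thesis .
qed

lemma onz_coeff:
  assumes "onz n g" "k < n"
  shows "B (g k) (\<Sum>j<n. d j *\<^sub>C g j) *\<^sub>C g k = d k *\<^sub>C g k"
proof -
  have "B (g k) (\<Sum>j<n. d j *\<^sub>C g j) = (\<Sum>j<n. d j * B (g k) (g j))"
    by (simp add: B_sum_right B_scale_right)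
  also have "\<dots> = d k * B (g k) (g k)"
    using assms unfolding onz_def by (subst sum.remove[of _ k]) (auto intro!: sum.neutral)
  finally show ?thesis using assms unfolding onz_def
    by (metis cscale_zero_right mult.right_neutral)
qed

lemma onz_expand:
  assumes "onz n g" "y = (\<Sum>j<n. d j *\<^sub>C g j)"
  shows "y = (\<Sum>k<n. B (g k) y *\<^sub>C g k)"
  using onz_coeff[OF assms(1)] assms(2) by simp

lemma onz_parseval:
  assumes "onz n g" "x = (\<Sum>k<n. B (g k) x *\<^sub>C g k)"
  shows "B x y = (\<Sum>k<n. cnj (B (g k) x) * B (g k) y)"
proof -
  have "B x y = (\<Sum>k<n. cnj (B (g k) x) * B (g k) y)"
    apply (subst assms(2))
    apply (simp add: B_sum_left B_scale_left)
    done
  then show ?thesis .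
qed

fun gsf :: "(nat \<Rightarrow> 'a) \<Rightarrow> nat \<Rightarrow> nat \<Rightarrow> 'a" where
  "gsf e 0 = (\<lambda>_. 0)"
| "gsf e (Suc k) = (gsf e k)(k := nrm (e k - (\<Sum>j<k. B (gsf e k j) (e k) *\<^sub>C gsf e k j)))"

definition gs :: "(nat \<Rightarrow> 'a) \<Rightarrow> nat \<Rightarrow> 'a" where
  "gs e i = gsf e (Suc i) i"

lemma gsf_stable: "j < k \<Longrightarrow> gsf e k j = gs e j"
proof (induction k)
  case 0 then show ?case by simp
next
  case (Suc k)
  then show ?case by (cases "j = k") (auto simp: gs_def)
qed

definition res :: "(nat \<Rightarrow> 'a) \<Rightarrow> nat \<Rightarrow> 'a" where
  "res e k = e k - (\<Sum>j<k. B (gs e j) (e k) *\<^sub>C gs e j)"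

lemma gs_eq: "gs e k = nrm (res e k)"
proof -
  have "gs e k = nrm (e k - (\<Sum>j<k. B (gsf e k j) (e k) *\<^sub>C gsf e k j))" by (simp add: gs_def)
  also have "(\<Sum>j<k. B (gsf e k j) (e k) *\<^sub>C gsf e k j) = (\<Sum>j<k. B (gs e j) (e k) *\<^sub>C gs e j)"
    by (intro sum.cong) (auto simp: gsf_stable)
  finally show ?thesis by (simp add: res_def)
qed

lemma gs_onz: "onz n (gs e)"
proof (induction n)
  case 0 then show ?case by (simp add: onz_def)
next
  case (Suc n)
  have unit: "gs e n = 0 \<or> B (gs e n) (gs e n) = 1"
    using nrm_unit gs_eq by (metis nrm_zero_iff)
  have orth: "B (gs e j) (gs e n) = 0" if j: "j < n" for j
  proof -
    have "B (gs e j) (res e n) = B (gs e j) (e n) - (\<Sum>i<n. B (gs e i) (e n) * B (gs e j) (gs e i))"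
      by (simp add: res_def B_diff_right B_sum_right B_scale_right)
    also have "(\<Sum>i<n. B (gs e i) (e n) * B (gs e j) (gs e i)) = B (gs e j) (e n) * B (gs e j) (gs e j)"
      using Suc.IH j unfolding onz_def by (subst sum.remove[of _ j]) (auto intro!: sum.neutral)
    finally have "B (gs e j) (res e n) = B (gs e j) (e n) - B (gs e j) (e n) * B (gs e j) (gs e j)" .
    moreover have "gs e j = 0 \<or> B (gs e j) (gs e j) = 1" using Suc.IH j unfolding onz_def by blast
    ultimately have "B (gs e j) (res e n) = 0" by auto
    then show ?thesis by (simp add: gs_eq nrm_def B_scale_right)
  qed
  show ?case using Suc.IH unit orth unfolding onz_def
    by (auto simp: less_Suc_eq) (metis B_conj complex_cnj_zero orth)+
qed

lemma gs_expand_e: "e k = (\<Sum>j<Suc k. B (gs e j) (e k) *\<^sub>C gs e j)"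
proof (cases "res e k = 0")
  case True
  then have "e k = (\<Sum>j<k. B (gs e j) (e k) *\<^sub>C gs e j)" by (simp add: res_def)
  moreover have "gs e k = 0" using True gs_eq nrm_zero_iff by simp
  ultimately show ?thesis by simp
next
  case False
  have ek: "e k = res e k + (\<Sum>j<k. B (gs e j) (e k) *\<^sub>C gs e j)" by (simp add: res_def)
  have o: "onz (Suc k) (gs e)" by (rule gs_onz)
  have "B (gs e k) (e k) = B (gs e k) (res e k)"
  proof -
    have "B (gs e k) (\<Sum>j<k. B (gs e j) (e k) *\<^sub>C gs e j) = 0"
      using o unfolding onz_def by (auto simp: B_sum_right B_scale_right intro!: sum.neutral)
    then show ?thesis by (subst ek) (simp add: B_add_right)
  qed
  also have "\<dots> = complex_of_real (sqrt (Re (B (res e k) (res e k))))"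
  proof -
    have r: "Re (B (res e k) (res e k)) > 0" using False B_pos_strict by blast
    have "B (gs e k) (res e k) = complex_of_real (1 / sqrt (Re (B (res e k) (res e k)))) * B (res e k) (res e k)"
      using False by (simp add: gs_eq nrm_def B_scale_left)
    also have "\<dots> = complex_of_real (1 / sqrt (Re (B (res e k) (res e k))) * Re (B (res e k) (res e k)))"
      by (subst B_self_real) simp
    also have "1 / sqrt (Re (B (res e k) (res e k))) * Re (B (res e k) (res e k)) = sqrt (Re (B (res e k) (res e k)))"
      using r real_div_sqrt[of "Re (B (res e k) (res e k))"] by simp
    finally show ?thesis .
  qed
  finally have "B (gs e k) (e k) *\<^sub>C gs e k = res e k"
    using nrm_back[OF False] gs_eq by simp
  then show ?thesis using ek by (simp add: add.commute)
qed

definition comb :: "nat \<Rightarrow> (nat \<Rightarrow> 'a) \<Rightarrow> 'a set" where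
  "comb n g = {\<Sum>j<n. d j *\<^sub>C g j | d. True}"

lemma comb_iff: "x \<in> comb n g \<longleftrightarrow> (\<exists>d. x = (\<Sum>j<n. d j *\<^sub>C g j))"
  by (auto simp: comb_def)
lemma comb_add: "x \<in> comb n g \<Longrightarrow> y \<in> comb n g \<Longrightarrow> x + y \<in> comb n g"
proof -
  assume "x \<in> comb n g" "y \<in> comb n g"
  then obtain d1 d2 where "x = (\<Sum>j<n. d1 j *\<^sub>C g j)" "y = (\<Sum>j<n. d2 j *\<^sub>C g j)"
    unfolding comb_def by blast
  then have "x + y = (\<Sum>j<n. (d1 j + d2 j) *\<^sub>C g j)" by (simp add: sum.distrib cscale_add_left)
  then have "\<exists>d. x + y = (\<Sum>j<n. d j *\<^sub>C g j)" by (rule exI[of _ "\<lambda>j. d1 j + d2 j"])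
  then show ?thesis unfolding comb_iff .
qed
lemma comb_scale: "x \<in> comb n g \<Longrightarrow> c *\<^sub>C x \<in> comb n g"
proof -
  assume "x \<in> comb n g"
  then obtain d1 where "x = (\<Sum>j<n. d1 j *\<^sub>C g j)" unfolding comb_def by blast
  then have "c *\<^sub>C x = (\<Sum>j<n. (c * d1 j) *\<^sub>C g j)" by (simp add: cscale_sum_right cscale_cscale)
  then have "\<exists>d. c *\<^sub>C x = (\<Sum>j<n. d j *\<^sub>C g j)" by (rule exI[of _ "\<lambda>j. c * d1 j"])
  then show ?thesis unfolding comb_iff .
qed
lemma comb_zero: "0 \<in> comb n g"
  unfolding comb_def by (auto intro!: exI[of _ "\<lambda>j. 0"])
lemma comb_sum: "(\<And>i. i \<in> S \<Longrightarrow> f i \<in> comb n g) \<Longrightarrow> (\<Sum>i\<in>S. f i) \<in> comb n g"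
  by (induction S rule: infinite_finite_induct) (auto intro: comb_add comb_zero)
lemma comb_mono: "m \<le> n \<Longrightarrow> x \<in> comb m g \<Longrightarrow> x \<in> comb n g"
proof -
  assume mn: "m \<le> n" and "x \<in> comb m g"
  then obtain d where x: "x = (\<Sum>j<m. d j *\<^sub>C g j)" unfolding comb_def by blast
  have "x = (\<Sum>j<n. (if j < m then d j else 0) *\<^sub>C g j)"
    unfolding x using mn by (intro sum.mono_neutral_cong_left) auto
  then have "\<exists>d. x = (\<Sum>j<n. d j *\<^sub>C g j)" by (rule exI[of _ "\<lambda>j. if j < m then d j else 0"])
  then show ?thesis unfolding comb_iff .
qed
lemma comb_elem: "k < n \<Longrightarrow> g k \<in> comb n g"
proof -
  assume k: "k < n"
  have "(\<Sum>j<n. (if j = k then 1 else 0) *\<^sub>C g j) = (\<Sum>j<n. if j = k then g k else 0)"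
    by (intro sum.cong) (auto simp: cscale_one)
  also have "\<dots> = g k" using k by simp
  finally have "g k = (\<Sum>j<n. (if j = k then 1 else 0) *\<^sub>C g j)" by simp
  then have "\<exists>d. g k = (\<Sum>j<n. d j *\<^sub>C g j)" by (rule exI[of _ "\<lambda>j. if j = k then 1 else 0"])
  then show ?thesis unfolding comb_iff .
qed

lemma e_in_comb_gs: "k < n \<Longrightarrow> e k \<in> comb n (gs e)"
proof -
  assume k: "k < n"
  have "\<exists>d. e k = (\<Sum>j<Suc k. d j *\<^sub>C gs e j)"
    using gs_expand_e[of e k] by (rule exI[of _ "\<lambda>j. B (gs e j) (e k)"])
  then have "e k \<in> comb (Suc k) (gs e)" unfolding comb_iff .
  then show ?thesis using k comb_mono by (metis Suc_leI)
qed

end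



lemma pform_cinner: "pform (cinner :: 'a::cinner_space \<Rightarrow> 'a \<Rightarrow> complex)"
  by unfold_locales (auto simp: cinner_add_right cinner_cscale_right cinner_self_Re_nonneg cinner_zero_iff intro: cinner_conj)

interpretation std: pform "cinner :: 'a::cinner_space \<Rightarrow> 'a \<Rightarrow> complex"
  by (rule pform_cinner)

definition is_onb :: "nat \<Rightarrow> (nat \<Rightarrow> 'a::cinner_space) \<Rightarrow> bool" where
  "is_onb n e \<longleftrightarrow> std.onz n e \<and> (\<forall>x. x = (\<Sum>k<n. cinner (e k) x *\<^sub>C e k))"

lemma onb_exists:
  assumes "finite_dim TYPE('a::cinner_space)"
  shows "\<exists>n (e :: nat \<Rightarrow> 'a). is_onb n e"
proof -
  obtain Bs :: "'a set" where Bs: "finite Bs" "lin_span Bs = UNIV"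
    using assms unfolding finite_dim_def by blast
  obtain bs where bs: "set bs = Bs" using finite_list[OF Bs(1)] by blast
  define n where "n = length bs"
  define f where "f i = bs ! i" for i
  define g where "g = std.gs f"
  have on: "std.onz n g" unfolding g_def by (rule std.gs_onz)
  have inB: "v \<in> std.comb n g" if "v \<in> Bs" for v
  proof -
    have "v \<in> set bs" using that bs by simp
    then obtain i where "i < length bs" "bs ! i = v" unfolding in_set_conv_nth by blast
    then have "i < n" "v = f i" unfolding n_def f_def by auto
    then show ?thesis unfolding g_def by (simp add: std.e_in_comb_gs)
  qed
  have "x \<in> std.comb n g" for x
  proof -
    have "x \<in> lin_span Bs" using Bs by simp
    then obtain m c v where x: "x = (\<Sum>i<(m::nat). c i *\<^sub>C v i)" "\<forall>i<m. v i \<in> Bs"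
      unfolding lin_span_def by blast
    show ?thesis unfolding x(1) using x(2) inB
      by (intro std.comb_sum std.comb_scale) auto
  qed
  have "x = (\<Sum>k<n. cinner (g k) x *\<^sub>C g k)" for x
  proof -
    obtain d where "x = (\<Sum>j<n. d j *\<^sub>C g j)" using \<open>\<And>x. x \<in> std.comb n g\<close>[of x] unfolding std.comb_iff by blast
    then show ?thesis by (rule std.onz_expand[OF on])
  qed
  then show ?thesis using on unfolding is_onb_def by blast
qed

definition tr :: "nat \<Rightarrow> (nat \<Rightarrow> 'a::cinner_space) \<Rightarrow> ('a \<Rightarrow> 'a) \<Rightarrow> complex" where
  "tr n e X = (\<Sum>i<n. cinner (e i) (X (e i)))"

lemma tr_comm:
  assumes onb: "is_onb n e" and X: "clinear X" and Y: "clinear Y"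
  shows "tr n e (X \<circ> Y) = tr n e (Y \<circ> X)"
proof -
  have exp: "z = (\<Sum>k<n. cinner (e k) z *\<^sub>C e k)" for z using onb unfolding is_onb_def by blast
  have XY: "cinner (e i) (X (Y (e i))) = (\<Sum>j<n. cinner (e j) (Y (e i)) * cinner (e i) (X (e j)))" for i
  proof -
    have "X (Y (e i)) = X (\<Sum>j<n. cinner (e j) (Y (e i)) *\<^sub>C e j)" using exp[of "Y (e i)"] by simp
    also have "\<dots> = (\<Sum>j<n. cinner (e j) (Y (e i)) *\<^sub>C X (e j))"
      by (simp add: clinear_sum[OF X] clinear_scale[OF X])
    finally show ?thesis by (simp add: cinner_sum_right cinner_cscale_right)
  qed
  have YX: "cinner (e i) (Y (X (e i))) = (\<Sum>j<n. cinner (e j) (X (e i)) * cinner (e i) (Y (e j)))" for i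
  proof -
    have "Y (X (e i)) = Y (\<Sum>j<n. cinner (e j) (X (e i)) *\<^sub>C e j)" using exp[of "X (e i)"] by simp
    also have "\<dots> = (\<Sum>j<n. cinner (e j) (X (e i)) *\<^sub>C Y (e j))"
      by (simp add: clinear_sum[OF Y] clinear_scale[OF Y])
    finally show ?thesis by (simp add: cinner_sum_right cinner_cscale_right)
  qed
  have "tr n e (X \<circ> Y) = (\<Sum>i<n. \<Sum>j<n. cinner (e j) (Y (e i)) * cinner (e i) (X (e j)))"
    unfolding tr_def by (simp add: XY)
  also have "\<dots> = (\<Sum>j<n. \<Sum>i<n. cinner (e j) (Y (e i)) * cinner (e i) (X (e j)))"
    by (rule sum.swap)
  also have "\<dots> = tr n e (Y \<circ> X)"
    unfolding tr_def by (simp add: YX mult.commute)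
  finally show ?thesis .
qed

lemma tr_diff: "tr n e (\<lambda>x. X x - Y x) = tr n e X - tr n e Y"
  unfolding tr_def by (simp add: cinner_diff_right sum_subtractf)

lemma tr_scale: "tr n e (\<lambda>x. c *\<^sub>C X x) = c * tr n e X"
  unfolding tr_def by (simp add: cinner_cscale_right sum_distrib_left)

lemma tr_cong: "(\<And>x. X x = Y x) \<Longrightarrow> tr n e X = tr n e Y"
  unfolding tr_def by simp

lemma onb_bounded:
  fixes L :: "'a::cinner_space \<Rightarrow> 'b::cinner_space" and e :: "nat \<Rightarrow> 'a"
  assumes onb: "is_onb n e" and L: "clinear L"
  shows "bounded_clinear L"
proof -
  have exp: "z = (\<Sum>k<n. cinner (e k) z *\<^sub>C e k)" for z using onb unfolding is_onb_def by blast
  define K where "K = (\<Sum>k<n. cnorm (e k) * cnorm (L (e k)))"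
  have "cnorm (L x) \<le> K * cnorm x" for x
  proof -
    have "L x = (\<Sum>k<n. cinner (e k) x *\<^sub>C L (e k))"
      using exp[of x] by (metis (no_types, lifting) L clinear_scale clinear_sum sum.cong)
    then have "cnorm (L x) \<le> (\<Sum>k<n. cnorm (cinner (e k) x *\<^sub>C L (e k)))"
      using cnorm_sum by metis
    also have "\<dots> = (\<Sum>k<n. cmod (cinner (e k) x) * cnorm (L (e k)))"
      by (simp add: cnorm_cscale)
    also have "\<dots> \<le> (\<Sum>k<n. (cnorm (e k) * cnorm x) * cnorm (L (e k)))"
      by (intro sum_mono mult_right_mono cauchy_schwarz cnorm_nonneg)
    also have "\<dots> = K * cnorm x" by (simp add: K_def sum_distrib_left sum_distrib_right algebra_simps)
    finally show ?thesis .
  qed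
  then show ?thesis using L unfolding bounded_clinear_def by blast
qed



lemma cholesky:
  fixes G :: "'a::cinner_space \<Rightarrow> 'a" and e :: "nat \<Rightarrow> 'a"
  assumes onb: "is_onb n e" and G: "clinear G"
    and herm: "\<And>x y. cinner x (G y) = cnj (cinner y (G x))"
    and posdef: "\<And>x. x \<noteq> 0 \<Longrightarrow> 0 < Re (cinner x (G x))"
  shows "\<exists>(T::'a \<Rightarrow> 'a) S. clinear T \<and> clinear S \<and> (\<forall>x. S (T x) = x) \<and> (\<forall>y. T (S y) = y) \<and>
           (\<forall>x y. cinner (T x) (T y) = cinner x (G y))"
proof -
  define BG where "BG x y = cinner x (G y)" for x y
  have pf: "pform BG"
  proof
    fix x y z :: 'a and c :: complex
    show "BG x y = cnj (BG y x)" unfolding BG_def by (rule herm)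
    show "BG x (y + z) = BG x y + BG x z" unfolding BG_def by (simp add: clinear_add[OF G] cinner_add_right)
    show "BG x (c *\<^sub>C y) = c * BG x y" unfolding BG_def by (simp add: clinear_scale[OF G] cinner_cscale_right)
    have im: "Im (BG x x) = 0" using herm[of x x] unfolding BG_def by (metis cnj.simps(2) neg_equal_zero)
    have re: "0 \<le> Re (BG x x)"
      using posdef[of x] clinear_zero[OF G] unfolding BG_def by (cases "x = 0") auto
    show "Im (BG x x) = 0 \<and> 0 \<le> Re (BG x x)" using im re by blast
    show "(BG x x = 0) = (x = 0)"
    proof
      assume "BG x x = 0" then show "x = 0" using posdef[of x] unfolding BG_def by force
    qed (simp add: BG_def clinear_zero[OF G])
  qed
  interpret gp: pform BG by (rule pf)
  define f where "f = gp.gs e"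
  have son: "std.onz n e" and exp: "\<And>x. x = (\<Sum>k<n. cinner (e k) x *\<^sub>C e k)"
    using onb unfolding is_onb_def by blast+
  have gon: "gp.onz n f" unfolding f_def by (rule gp.gs_onz)
  have orth: "cinner (e k) (f j) = 0" if "j < k" "k < n" for j k
    using that
  proof (induction j arbitrary: k rule: less_induct)
    case (less j)
    have r: "cinner (e k) (gp.res e j) = 0"
    proof -
      have "cinner (e k) (gp.res e j) = cinner (e k) (e j) - (\<Sum>i<j. BG (f i) (e j) * cinner (e k) (f i))"
        unfolding gp.res_def f_def by (simp add: cinner_diff_right cinner_sum_right cinner_cscale_right)
      also have "cinner (e k) (e j) = 0" using son less.prems unfolding std.onz_def by auto
      also have "(\<Sum>i<j. BG (f i) (e j) * cinner (e k) (f i)) = 0"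
        using less.IH less.prems by (intro sum.neutral) auto
      finally show ?thesis by simp
    qed
    show ?case unfolding f_def gp.gs_eq gp.nrm_def using r by (simp add: cinner_cscale_right)
  qed
  have zero_iff: "f k = 0 \<longleftrightarrow> e k = 0" if k: "k < n" for k
  proof
    assume fk: "f k = 0"
    have "e k = (\<Sum>j<Suc k. BG (f j) (e k) *\<^sub>C f j)" unfolding f_def by (rule gp.gs_expand_e)
    also have "\<dots> = (\<Sum>j<k. BG (f j) (e k) *\<^sub>C f j)" using fk by simp
    finally have ek: "e k = (\<Sum>j<k. BG (f j) (e k) *\<^sub>C f j)" .
    have "cinner (e k) (e k) = (\<Sum>j<k. BG (f j) (e k) * cinner (e k) (f j))"
      by (subst (2) ek) (simp add: cinner_sum_right cinner_cscale_right)
    also have "\<dots> = 0" using orth k by (intro sum.neutral) auto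
    finally show "e k = 0" using cinner_zero_iff by blast
  next
    assume ek: "e k = 0"
    have "gp.res e k = 0" unfolding gp.res_def using ek by simp
    then show "f k = 0" unfolding f_def gp.gs_eq gp.nrm_def by simp
  qed
  have eunit: "e k = 0 \<or> cinner (e k) (e k) = 1" if "k < n" for k using son that unfolding std.onz_def by blast
  have funit: "f k = 0 \<or> BG (f k) (f k) = 1" if "k < n" for k using gon that unfolding gp.onz_def by blast
  have ef: "cinner (e k) (e k) *\<^sub>C f k = f k" if "k < n" for k
    using eunit[OF that] zero_iff[OF that] by (auto simp: cscale_one)
  have fe: "BG (f k) (f k) *\<^sub>C e k = e k" if "k < n" for k
    using funit[OF that] zero_iff[OF that] by (auto simp: cscale_one)
  have fexp: "x = (\<Sum>k<n. BG (f k) x *\<^sub>C f k)" for x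
  proof -
    have "x \<in> gp.comb n f"
      by (subst exp[of x], intro gp.comb_sum gp.comb_scale) (auto simp: f_def gp.e_in_comb_gs)
    then obtain d where "x = (\<Sum>j<n. d j *\<^sub>C f j)" unfolding gp.comb_iff by blast
    then show ?thesis by (rule gp.onz_expand[OF gon])
  qed
  define T where "T x = (\<Sum>k<n. BG (f k) x *\<^sub>C e k)" for x
  define S where "S y = (\<Sum>k<n. cinner (e k) y *\<^sub>C f k)" for y
  have T_lin: "clinear T" unfolding clinear_def T_def
    by (simp add: gp.B_add_right gp.B_scale_right cscale_add_left sum.distrib cscale_sum_right cscale_cscale)
  have S_lin: "clinear S" unfolding clinear_def S_def
    by (simp add: cinner_add_right cinner_cscale_right cscale_add_left sum.distrib cscale_sum_right cscale_cscale)
  have ST: "S (T x) = x" for x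
  proof -
    have "S (T x) = (\<Sum>j<n. (BG (f j) x * cinner (e j) (e j)) *\<^sub>C f j)"
      unfolding S_def T_def by (intro sum.cong refl) (simp add: std.onz_inner[OF son])
    also have "\<dots> = (\<Sum>j<n. BG (f j) x *\<^sub>C f j)"
      by (intro sum.cong refl) (simp add: cscale_cscale[symmetric] ef)
    finally show ?thesis using fexp[of x] by simp
  qed
  have TS: "T (S y) = y" for y
  proof -
    have "T (S y) = (\<Sum>k<n. (cinner (e k) y * BG (f k) (f k)) *\<^sub>C e k)"
      unfolding S_def T_def by (intro sum.cong refl) (simp add: gp.onz_inner[OF gon])
    also have "\<dots> = (\<Sum>k<n. cinner (e k) y *\<^sub>C e k)"
      by (intro sum.cong refl) (simp add: cscale_cscale[symmetric] fe)
    finally show ?thesis using exp[of y] by simp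
  qed
  have TT: "cinner (T x) (T y) = cinner x (G y)" for x y
  proof -
    have "cinner (T x) (T y) = (\<Sum>k<n. cnj (BG (f k) x) * cinner (e k) (T y))"
      unfolding T_def[of x] by (simp add: cinner_sum_left cinner_cscale_left)
    also have "\<dots> = (\<Sum>k<n. cnj (BG (f k) x) * (BG (f k) y * cinner (e k) (e k)))"
      unfolding T_def by (intro sum.cong refl) (simp add: std.onz_inner[OF son])
    also have "\<dots> = (\<Sum>k<n. cnj (BG (f k) x) * BG (f k) y)"
    proof (intro sum.cong refl)
      fix k assume "k \<in> {..<n}"
      then have k: "k < n" by simp
      show "cnj (BG (f k) x) * (BG (f k) y * cinner (e k) (e k)) = cnj (BG (f k) x) * BG (f k) y"
        using eunit[OF k] zero_iff[OF k] by auto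
    qed
    also have "\<dots> = BG x y" by (rule gp.onz_parseval[OF gon fexp, symmetric])
    finally show ?thesis by (simp add: BG_def)
  qed
  have "clinear T \<and> clinear S \<and> (\<forall>x. S (T x) = x) \<and> (\<forall>y. T (S y) = y) \<and>
           (\<forall>x y. cinner (T x) (T y) = cinner x (G y))"
    using T_lin S_lin ST TS TT by blast
  then show ?thesis by blast
qed



lemma ca_empty:
  assumes "countably_additive_c M \<mu>"
  shows "\<mu> {} = 0"
proof -
  have "(\<lambda>n::nat. \<mu> {}) sums \<mu> (\<Union>n::nat. {})"
    using assms unfolding countably_additive_c_def by (auto simp: disjoint_family_on_def)
  then have s: "(\<lambda>n::nat. \<mu> {}) sums \<mu> {}" by simp
  then have "(\<lambda>n::nat. \<mu> {}) \<longlonglongrightarrow> 0" by (intro summable_LIMSEQ_zero sums_summable) (rule s)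
  moreover have "(\<lambda>n::nat. \<mu> {}) \<longlonglongrightarrow> \<mu> {}" by (rule tendsto_const)
  ultimately show ?thesis using LIMSEQ_unique by metis
qed

lemma ca_add:
  assumes ca: "countably_additive_c M \<mu>" and A: "A \<in> sets M" and B: "B \<in> sets M" and AB: "A \<inter> B = {}"
  shows "\<mu> (A \<union> B) = \<mu> A + \<mu> B"
proof -
  define F where "F n = (if n = 0 then A else if n = 1 then B else {})" for n :: nat
  have r: "range F \<subseteq> sets M" using A B by (auto simp: F_def)
  have d: "disjoint_family F" using AB unfolding disjoint_family_on_def F_def by auto
  have u: "(\<Union>n. F n) = A \<union> B"
  proof
    show "(\<Union>n. F n) \<subseteq> A \<union> B" by (auto simp: F_def split: if_splits)
    show "A \<union> B \<subseteq> (\<Union>n. F n)"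
    proof
      fix x assume "x \<in> A \<union> B"
      then show "x \<in> (\<Union>n. F n)"
      proof
        assume "x \<in> A" then have "x \<in> F 0" by (simp add: F_def)
        then show ?thesis by blast
      next
        assume "x \<in> B" then have "x \<in> F 1" by (simp add: F_def)
        then show ?thesis by blast
      qed
    qed
  qed
  have s1: "(\<lambda>n. \<mu> (F n)) sums \<mu> (A \<union> B)" using ca r d u unfolding countably_additive_c_def by metis
  have e: "\<mu> {} = 0" using ca by (rule ca_empty)
  have s2: "(\<lambda>n. \<mu> (F n)) sums (\<Sum>n\<in>{0,1}. \<mu> (F n))"
    by (rule sums_finite) (auto simp: F_def e)
  have "(\<Sum>n\<in>{0::nat,1}. \<mu> (F n)) = \<mu> A + \<mu> B" by (simp add: F_def)
  then show ?thesis using sums_unique2[OF s1 s2] by simp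
qed

lemma cstar_one: "cstar (1::'a::cstar_algebra) = 1"
proof -
  have "cstar (1::'a) = cstar 1 * 1" by simp
  have cc: "cstar (cstar (1::'a)) = 1" by (rule cstar_cstar)
  have "cstar (cstar (1::'a) * 1) = cstar 1 * cstar (cstar 1)" by (rule cstar_mult)
  then have "cstar (cstar (1::'a)) = cstar 1 * 1" by (simp add: cc)
  then show ?thesis using cc by simp
qed

lemma cp_pos:
  fixes \<phi> :: "'a::cstar_algebra \<Rightarrow> 'h::chilbert \<Rightarrow> 'h"
  assumes "cp_map \<phi>"
  shows "cnonneg (cinner x (\<phi> 1 x))"
proof -
  have h: "\<forall>(n::nat) (B::nat \<Rightarrow> nat \<Rightarrow> 'a) (x::nat \<Rightarrow> 'h).
        cnonneg (\<Sum>i<n. \<Sum>j<n. cinner (x i) (\<phi> (\<Sum>k<n. cstar (B k i) * B k j) (x j)))"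
    using assms unfolding cp_map_def by blast
  from h[rule_format, where n="Suc 0" and B="\<lambda>_ _. 1" and x="\<lambda>_. x"] show ?thesis by (simp add: cstar_one)
qed

lemma herm_of_pos:
  fixes P :: "'h::cinner_space \<Rightarrow> 'h"
  assumes P: "clinear P" and im: "\<And>z. Im (cinner z (P z)) = 0"
  shows "cinner x (P y) = cnj (cinner y (P x))"
proof -
  define a where "a = cinner x (P y)"
  define b where "b = cinner y (P x)"
  have "cinner (x + y) (P (x + y)) = cinner x (P x) + a + b + cinner y (P y)"
    by (simp add: a_def b_def clinear_add[OF P] cinner_add_left cinner_add_right)
  then have i1: "Im (a + b) = 0" using im[of "x + y"] im[of x] im[of y] by simp
  have "cinner (x + \<i> *\<^sub>C y) (P (x + \<i> *\<^sub>C y)) = cinner x (P x) + \<i> * a - \<i> * b + cinner y (P y)"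
    by (simp add: a_def b_def clinear_add[OF P] clinear_scale[OF P] cinner_add_left cinner_add_right
        cinner_cscale_left cinner_cscale_right algebra_simps)
  then have i2: "Im (\<i> * a - \<i> * b) = 0" using im[of "x + \<i> *\<^sub>C y"] im[of x] im[of y] by simp
  show ?thesis using i1 i2 unfolding a_def[symmetric] b_def[symmetric]
    by (simp add: complex_eq_iff)
qed

lemma psd_cs:
  fixes P :: "'h::cinner_space \<Rightarrow> 'h"
  assumes P: "clinear P" and im: "\<And>z. Im (cinner z (P z)) = 0" and pos: "\<And>z. 0 \<le> Re (cinner z (P z))"
  shows "(cmod (cinner z (P y)))^2 \<le> Re (cinner z (P z)) * Re (cinner y (P y))"
proof -
  define F where "F u v = cinner u (P v)" for u v
  have herm: "F u v = cnj (F v u)" for u v unfolding F_def by (rule herm_of_pos[OF P im])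
  define b where "b = F z y"
  have Freal: "F u u = complex_of_real (Re (F u u))" for u using im[of u] unfolding F_def by (simp add: complex_eq_iff)
  have key: "0 \<le> Re (F y y) - 2 * t * (cmod b)^2 + t^2 * (cmod b)^2 * Re (F z z)" for t :: real
  proof -
    define s where "s = - (complex_of_real t * b)"
    have "F (y + s *\<^sub>C z) (y + s *\<^sub>C z) = F y y + s * F y z + cnj s * F z y + cnj s * s * F z z"
      unfolding F_def by (simp add: clinear_add[OF P] clinear_scale[OF P] cinner_add_left cinner_add_right
        cinner_cscale_left cinner_cscale_right algebra_simps)
    also have "F y z = cnj b" unfolding b_def by (rule herm)
    also have "F z y = b" unfolding b_def ..
    finally have eq: "F (y + s *\<^sub>C z) (y + s *\<^sub>C z) = F y y + s * cnj b + cnj s * b + cnj s * s * F z z" .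
    have bb: "b * cnj b = complex_of_real ((cmod b)^2)" by (metis complex_norm_square of_real_power)
    have "Re (F (y + s *\<^sub>C z) (y + s *\<^sub>C z)) = Re (F y y) - 2 * t * (cmod b)^2 + t^2 * (cmod b)^2 * Re (F z z)"
    proof -
      have "s * cnj b = - complex_of_real (t * (cmod b)^2)" unfolding s_def using bb
        by (simp add: algebra_simps)
      moreover have "cnj s * b = - complex_of_real (t * (cmod b)^2)" unfolding s_def using bb
        by (simp add: algebra_simps)
      moreover have "cnj s * s * F z z = complex_of_real (t^2 * (cmod b)^2 * Re (F z z))"
      proof -
        have "cnj s * s = complex_of_real (t^2 * (cmod b)^2)" unfolding s_def using bb
          by (simp add: algebra_simps power2_eq_square)
        then show ?thesis by (subst Freal) (simp add: algebra_simps)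
      qed
      ultimately show ?thesis unfolding eq by simp
    qed
    moreover have "0 \<le> Re (F (y + s *\<^sub>C z) (y + s *\<^sub>C z))" unfolding F_def by (rule pos)
    ultimately show ?thesis by simp
  qed
  have Fzz: "0 \<le> Re (F z z)" unfolding F_def by (rule pos)
  have Fyy: "0 \<le> Re (F y y)" unfolding F_def by (rule pos)
  show ?thesis
  proof (cases "Re (F z z) = 0")
    case True
    have "(cmod b)^2 \<le> 0"
    proof (rule ccontr)
      assume "\<not> (cmod b)^2 \<le> 0"
      then have p: "(cmod b)^2 > 0" by simp
      have "0 \<le> Re (F y y) - 2 * ((Re (F y y) + 1) / (cmod b)^2) * (cmod b)^2"
        using key[of "(Re (F y y) + 1) / (cmod b)^2"] True by simp
      then show False using p Fyy by simp
    qed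
    then show ?thesis using True Fyy unfolding F_def b_def by simp
  next
    case False
    then have pz: "Re (F z z) > 0" using Fzz by simp
    have "0 \<le> Re (F y y) - 2 * (1 / Re (F z z)) * (cmod b)^2 + (1 / Re (F z z))^2 * (cmod b)^2 * Re (F z z)"
      by (rule key)
    also have "\<dots> = Re (F y y) - (cmod b)^2 / Re (F z z)"
      using pz by (simp add: power2_eq_square field_simps)
    finally have "(cmod b)^2 / Re (F z z) \<le> Re (F y y)" by simp
    then have "(cmod b)^2 \<le> Re (F y y) * Re (F z z)" using pz by (simp add: divide_le_eq)
    then show ?thesis unfolding F_def b_def by (simp add: mult.commute)
  qed
qed

lemma adj_inv:
  fixes S T :: "'h::chilbert \<Rightarrow> 'h"
  assumes S: "bounded_clinear S" and T: "bounded_clinear T" and ST: "\<And>x. S (T x) = x"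
  shows "adj T (adj S y) = y"
proof (rule cinner_ext)
  fix z
  have "cinner z (adj T (adj S y)) = cinner (T z) (adj S y)" by (simp add: adj_prop[OF T])
  also have "\<dots> = cinner (S (T z)) y" by (simp add: adj_prop[OF S])
  finally show "cinner z (adj T (adj S y)) = cinner z y" by (simp add: ST)
qed



lemma ucp_facts:
  fixes M :: "'x measure" and I :: "'x set \<Rightarrow> 'a::cstar_algebra \<Rightarrow> 'h::chilbert \<Rightarrow> 'h"
  assumes "ucp_instrument M I"
  shows ucp_cp: "\<And>A. A \<in> sets M \<Longrightarrow> cp_map (I A)"
    and ucp_ca: "\<And>a h k. countably_additive_c M (\<lambda>A. cinner h (I A a k))"
    and ucp_unit: "I (space M) 1 = id"
  using assms unfolding ucp_instrument_def cp_instrument_def by auto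

lemma cp_add: "cp_map \<phi> \<Longrightarrow> \<phi> (a + b) = (\<lambda>x. \<phi> a x + \<phi> b x)" by (simp add: cp_map_def)
lemma cp_scale: "cp_map \<phi> \<Longrightarrow> \<phi> (c *\<^sub>C a) = (\<lambda>x. c *\<^sub>C \<phi> a x)" by (simp add: cp_map_def)
lemma cp_bounded: "cp_map \<phi> \<Longrightarrow> bounded_clinear (\<phi> a)" by (simp add: cp_map_def)
lemma cp_posn:
  fixes \<phi> :: "'a::cstar_algebra \<Rightarrow> 'h::chilbert \<Rightarrow> 'h"
  shows "cp_map \<phi> \<Longrightarrow> cnonneg (\<Sum>i<(n::nat). \<Sum>j<n. cinner (x i) (\<phi> (\<Sum>k<n. cstar (B k i) * B k j) (x j)))"
  unfolding cp_map_def by auto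

lemma I_empty:
  fixes M :: "'x measure" and I :: "'x set \<Rightarrow> 'a::cstar_algebra \<Rightarrow> 'h::chilbert \<Rightarrow> 'h"
  assumes "ucp_instrument M I"
  shows "I {} a x = 0"
proof (rule cinner_ext)
  fix z show "cinner z (I {} a x) = cinner z 0"
    using ca_empty[OF ucp_ca[OF assms, of z a x]] by simp
qed

lemma I_add:
  fixes M :: "'x measure" and I :: "'x set \<Rightarrow> 'a::cstar_algebra \<Rightarrow> 'h::chilbert \<Rightarrow> 'h"
  assumes "ucp_instrument M I" "A \<in> sets M" "B \<in> sets M" "A \<inter> B = {}"
  shows "I (A \<union> B) a x = I A a x + I B a x"
proof (rule cinner_ext)
  fix z show "cinner z (I (A \<union> B) a x) = cinner z (I A a x + I B a x)"
    using ca_add[OF ucp_ca[OF assms(1), of z a x] assms(2-4)] by (simp add: cinner_add_right)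
qed

lemma cnonneg_comb: "cnonneg z \<Longrightarrow> cnonneg w \<Longrightarrow> 0 \<le> c \<Longrightarrow> 0 \<le> d \<Longrightarrow>
    cnonneg (complex_of_real c * z + complex_of_real d * w)"
  unfolding cnonneg_def by simp

lemma J_ucp:
  fixes M :: "'x measure" and I :: "'x set \<Rightarrow> 'a::cstar_algebra \<Rightarrow> 'h::chilbert \<Rightarrow> 'h" and e :: "nat \<Rightarrow> 'h"
    and S T :: "'h \<Rightarrow> 'h"
  assumes ucp: "ucp_instrument M I" and A0: "A0 \<in> sets M" and onb: "is_onb n e"
    and c: "0 \<le> c" and d: "0 \<le> d"
    and S: "bounded_clinear S" and T: "bounded_clinear T" and TS: "\<And>y. T (S y) = y"
    and TT: "\<And>x. adj T (T x) = complex_of_real c *\<^sub>C I A0 1 x + complex_of_real d *\<^sub>C I (space M - A0) 1 x"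
  shows "ucp_instrument M (\<lambda>A a x. adj S (complex_of_real c *\<^sub>C I (A \<inter> A0) a (S x) + complex_of_real d *\<^sub>C I (A - A0) a (S x)))"
proof -
  define J where "J A a x = adj S (complex_of_real c *\<^sub>C I (A \<inter> A0) a (S x) + complex_of_real d *\<^sub>C I (A - A0) a (S x))" for A a x
  have aS: "clinear (adj S)" by (rule adj_clinear[OF S])
  have lS: "clinear S" using S by (simp add: bounded_clinear_def)
  have inner_J: "cinner h (J A a k) = complex_of_real c * cinner (S h) (I (A \<inter> A0) a (S k)) + complex_of_real d * cinner (S h) (I (A - A0) a (S k))" for h A a k
    unfolding J_def by (simp add: adj_prop[OF S, symmetric] cinner_add_right cinner_cscale_right)
  have cpJ: "cp_map (J A)" if A: "A \<in> sets M" for A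
  proof -
    have A1: "A \<inter> A0 \<in> sets M" using A A0 by auto
    have A2: "A - A0 \<in> sets M" using A A0 by auto
    have cp1: "cp_map (I (A \<inter> A0))" by (rule ucp_cp[OF ucp A1])
    have cp2: "cp_map (I (A - A0))" by (rule ucp_cp[OF ucp A2])
    have lin1: "clinear (I (A \<inter> A0) a)" for a using cp_bounded[OF cp1] by (simp add: bounded_clinear_def)
    have lin2: "clinear (I (A - A0) a)" for a using cp_bounded[OF cp2] by (simp add: bounded_clinear_def)
    have add: "J A (a + b) = (\<lambda>x. J A a x + J A b x)" for a b
      unfolding J_def by (rule ext) (simp add: cp_add[OF cp1] cp_add[OF cp2] cscale_add_right
          clinear_add[OF aS, symmetric] add_ac)
    have scale: "J A (k *\<^sub>C a) = (\<lambda>x. k *\<^sub>C J A a x)" for k a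
      unfolding J_def by (rule ext) (simp add: cp_scale[OF cp1] cp_scale[OF cp2] cscale_cscale
          clinear_scale[OF aS, symmetric] cscale_add_right mult.commute)
    have linJ: "clinear (J A a)" for a
      unfolding clinear_def J_def
      by (simp add: clinear_add[OF lS] clinear_scale[OF lS] clinear_add[OF lin1] clinear_scale[OF lin1]
          clinear_add[OF lin2] clinear_scale[OF lin2] clinear_add[OF aS, symmetric] clinear_scale[OF aS, symmetric]
          cscale_add_right cscale_cscale mult.commute add_ac)
    have bdd: "bounded_clinear (J A a)" for a by (rule onb_bounded[OF onb linJ])
    have pos: "cnonneg (\<Sum>i<m. \<Sum>j<m. cinner (x i) (J A (\<Sum>k<m. cstar (B k i) * B k j) (x j)))"
      for m :: nat and B :: "nat \<Rightarrow> nat \<Rightarrow> 'a" and x :: "nat \<Rightarrow> 'h"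
    proof -
      have "(\<Sum>i<m. \<Sum>j<m. cinner (x i) (J A (\<Sum>k<m. cstar (B k i) * B k j) (x j))) =
          complex_of_real c * (\<Sum>i<m. \<Sum>j<m. cinner ((S \<circ> x) i) (I (A \<inter> A0) (\<Sum>k<m. cstar (B k i) * B k j) ((S \<circ> x) j)))
        + complex_of_real d * (\<Sum>i<m. \<Sum>j<m. cinner ((S \<circ> x) i) (I (A - A0) (\<Sum>k<m. cstar (B k i) * B k j) ((S \<circ> x) j)))"
        by (simp add: inner_J sum.distrib sum_distrib_left)
      moreover have "cnonneg (\<Sum>i<m. \<Sum>j<m. cinner ((S \<circ> x) i) (I (A \<inter> A0) (\<Sum>k<m. cstar (B k i) * B k j) ((S \<circ> x) j)))"
        by (rule cp_posn[OF cp1])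
      moreover have "cnonneg (\<Sum>i<m. \<Sum>j<m. cinner ((S \<circ> x) i) (I (A - A0) (\<Sum>k<m. cstar (B k i) * B k j) ((S \<circ> x) j)))"
        by (rule cp_posn[OF cp2])
      ultimately show ?thesis using cnonneg_comb c d by simp
    qed
    show ?thesis unfolding cp_map_def using add scale bdd pos by blast
  qed
  have caJ: "countably_additive_c M (\<lambda>A. cinner h (J A a k))" for a h k
    unfolding countably_additive_c_def
  proof (intro allI impI)
    fix F :: "nat \<Rightarrow> 'x set"
    assume r: "range F \<subseteq> sets M" and dj: "disjoint_family F"
    have r1: "range (\<lambda>n. F n \<inter> A0) \<subseteq> sets M" using r A0 by auto
    have r2: "range (\<lambda>n. F n - A0) \<subseteq> sets M" using r A0 by auto
    have d1: "disjoint_family (\<lambda>n. F n \<inter> A0)" using dj unfolding disjoint_family_on_def by auto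
    have d2: "disjoint_family (\<lambda>n. F n - A0)" using dj unfolding disjoint_family_on_def by auto
    have s1: "(\<lambda>n. cinner (S h) (I (F n \<inter> A0) a (S k))) sums cinner (S h) (I ((\<Union>n. F n) \<inter> A0) a (S k))"
      using ucp_ca[OF ucp, of "S h" a "S k"] r1 d1 unfolding countably_additive_c_def
      by (metis UN_extend_simps(4))
    have s2: "(\<lambda>n. cinner (S h) (I (F n - A0) a (S k))) sums cinner (S h) (I ((\<Union>n. F n) - A0) a (S k))"
    proof -
      have "(\<Union>n. F n - A0) = (\<Union>n. F n) - A0" by auto
      then show ?thesis using ucp_ca[OF ucp, of "S h" a "S k"] r2 d2 unfolding countably_additive_c_def
        by metis
    qed
    show "(\<lambda>n. cinner h (J (F n) a k)) sums cinner h (J (\<Union>n. F n) a k)"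
      unfolding inner_J by (intro sums_add sums_mult s1 s2)
  qed
  have unitJ: "J (space M) 1 = id"
  proof
    fix x
    have sp: "space M \<inter> A0 = A0" using sets.sets_into_space[OF A0] by auto
    have "J (space M) 1 x = adj S (adj T (T (S x)))" unfolding J_def sp TT ..
    also have "\<dots> = x" by (simp add: TS adj_inv[OF T S TS])
    finally show "J (space M) 1 x = id x" by simp
  qed
  have "ucp_instrument M J" unfolding ucp_instrument_def cp_instrument_def using cpJ caJ unitJ by blast
  then show ?thesis unfolding J_def .
qed



lemma mu_idem:
  fixes M :: "'x measure" and I :: "'x set \<Rightarrow> 'a::cstar_algebra \<Rightarrow> 'h::chilbert \<Rightarrow> 'h"
  assumes fd: "finite_dim TYPE('h)" and ext: "cstar_extreme_instrument M I" and A0: "A0 \<in> sets M"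
  shows "I A0 1 (I A0 1 y) = I A0 1 y"
proof -
  have ucp: "ucp_instrument M I" using ext unfolding cstar_extreme_instrument_def by blast
  obtain n and e :: "nat \<Rightarrow> 'h" where onb: "is_onb n e" using onb_exists[OF fd] by blast
  have exp: "z = (\<Sum>k<n. cinner (e k) z *\<^sub>C e k)" for z using onb unfolding is_onb_def by blast
  define \<mu> where "\<mu> = I A0 1"
  define \<nu> where "\<nu> = I (space M - A0) 1"
  have A0c: "space M - A0 \<in> sets M" using A0 by auto
  have mub: "bounded_clinear \<mu>" unfolding \<mu>_def by (rule cp_bounded[OF ucp_cp[OF ucp A0]])
  have nub: "bounded_clinear \<nu>" unfolding \<nu>_def by (rule cp_bounded[OF ucp_cp[OF ucp A0c]])
  have mul: "clinear \<mu>" using mub by (simp add: bounded_clinear_def)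
  have nul: "clinear \<nu>" using nub by (simp add: bounded_clinear_def)
  have munu: "\<mu> x + \<nu> x = x" for x
  proof -
    have "I (A0 \<union> (space M - A0)) 1 x = \<mu> x + \<nu> x"
      unfolding \<mu>_def \<nu>_def by (rule I_add[OF ucp A0 A0c]) auto
    moreover have "A0 \<union> (space M - A0) = space M" using sets.sets_into_space[OF A0] by auto
    ultimately show ?thesis using ucp_unit[OF ucp] by simp
  qed
  have nu_eq: "\<nu> x = x - \<mu> x" for x using munu[of x] by (simp add: eq_diff_eq add.commute)
  have mupos: "cnonneg (cinner x (\<mu> x))" for x unfolding \<mu>_def by (rule cp_pos[OF ucp_cp[OF ucp A0]])
  have nupos: "cnonneg (cinner x (\<nu> x))" for x unfolding \<nu>_def by (rule cp_pos[OF ucp_cp[OF ucp A0c]])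
  have muim: "Im (cinner x (\<mu> x)) = 0" for x using mupos[of x] by (simp add: cnonneg_def)
  have mure: "0 \<le> Re (cinner x (\<mu> x))" for x using mupos[of x] by (simp add: cnonneg_def)
  have nuim: "Im (cinner x (\<nu> x)) = 0" for x using nupos[of x] by (simp add: cnonneg_def)
  have nure: "0 \<le> Re (cinner x (\<nu> x))" for x using nupos[of x] by (simp add: cnonneg_def)
  have muh: "cinner x (\<mu> y) = cnj (cinner y (\<mu> x))" for x y by (rule herm_of_pos[OF mul muim])
  have nuh: "cinner x (\<nu> y) = cnj (cinner y (\<nu> x))" for x y by (rule herm_of_pos[OF nul nuim])
  have muh': "cinner x (\<mu> y) = cinner (\<mu> x) y" for x y by (metis muh cinner_conj)
  have chol: "\<exists>T S :: 'h \<Rightarrow> 'h. bounded_clinear T \<and> bounded_clinear S \<and> (\<forall>x. S (T x) = x) \<and> (\<forall>y. T (S y) = y) \<and>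
      (\<forall>x. adj T (T x) = complex_of_real c *\<^sub>C \<mu> x + complex_of_real d *\<^sub>C \<nu> x)"
    if c: "0 < c" and d: "0 < d" for c d :: real
  proof -
    define G where "G x = complex_of_real c *\<^sub>C \<mu> x + complex_of_real d *\<^sub>C \<nu> x" for x
    have Gl: "clinear G" unfolding clinear_def G_def
      by (simp add: clinear_add[OF mul] clinear_add[OF nul] clinear_scale[OF mul] clinear_scale[OF nul]
          cscale_add_right cscale_cscale mult.commute add_ac)
    have Gh: "cinner x (G y) = cnj (cinner y (G x))" for x y
      unfolding G_def by (simp add: cinner_add_right cinner_cscale_right muh[of x y] nuh[of x y])
    have Gp: "0 < Re (cinner x (G x))" if x: "x \<noteq> 0" for x
    proof -
      have "Re (cinner x (G x)) = c * Re (cinner x (\<mu> x)) + d * Re (cinner x (\<nu> x))"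
        unfolding G_def by (simp add: cinner_add_right cinner_cscale_right)
      also have "\<dots> \<ge> min c d * Re (cinner x (\<mu> x)) + min c d * Re (cinner x (\<nu> x))"
        using mure[of x] nure[of x] by (intro add_mono mult_right_mono) auto
      finally have le: "min c d * (Re (cinner x (\<mu> x)) + Re (cinner x (\<nu> x))) \<le> Re (cinner x (G x))"
        by (simp add: algebra_simps)
      have sm:  "Re (cinner x (\<mu> x)) + Re (cinner x (\<nu> x)) = Re (cinner x x)"
      proof -
        have "cinner x x = cinner x (\<mu> x + \<nu> x)" by (simp add: munu)
        also have "\<dots> = cinner x (\<mu> x) + cinner x (\<nu> x)" by (rule cinner_add_right)
        finally show ?thesis by simp
      qed
      have "0 < Re (cinner x x)" using x by (rule cinner_pos)
      moreover have "0 < min c d" using c d by simp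
      ultimately have "0 < min c d * Re (cinner x x)" by simp
      moreover have "min c d * Re (cinner x x) \<le> Re (cinner x (G x))" using le sm by simp
      ultimately show ?thesis by linarith
    qed
    obtain T S :: "'h \<Rightarrow> 'h" where TS: "clinear T" "clinear S" "\<forall>x. S (T x) = x" "\<forall>y. T (S y) = y"
        "\<forall>x y. cinner (T x) (T y) = cinner x (G y)"
      using cholesky[OF onb Gl Gh Gp] by blast
    have Tb: "bounded_clinear T" by (rule onb_bounded[OF onb TS(1)])
    have Sb: "bounded_clinear S" by (rule onb_bounded[OF onb TS(2)])
    have "adj T (T x) = G x" for x
    proof (rule cinner_ext)
      fix z show "cinner z (adj T (T x)) = cinner z (G x)"
        using TS(5) by (simp add: adj_prop[OF Tb, symmetric])
    qed
    then show ?thesis using Tb Sb TS(3,4) unfolding G_def by blast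
  qed
  obtain T1 S1 :: "'h \<Rightarrow> 'h" where T1: "bounded_clinear T1" and S1: "bounded_clinear S1"
    and ST1: "\<And>x. S1 (T1 x) = x" and TS1: "\<And>y. T1 (S1 y) = y"
    and TT1: "\<And>x. adj T1 (T1 x) = complex_of_real (1/4) *\<^sub>C \<mu> x + complex_of_real (3/4) *\<^sub>C \<nu> x"
    using chol[of "1/4" "3/4"] by auto
  obtain T2 S2 :: "'h \<Rightarrow> 'h" where T2: "bounded_clinear T2" and S2: "bounded_clinear S2"
    and ST2: "\<And>x. S2 (T2 x) = x" and TS2: "\<And>y. T2 (S2 y) = y"
    and TT2: "\<And>x. adj T2 (T2 x) = complex_of_real (3/4) *\<^sub>C \<mu> x + complex_of_real (1/4) *\<^sub>C \<nu> x"
    using chol[of "3/4" "1/4"] by auto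
  define J1 where "J1 A a x = adj S1 (complex_of_real (1/4) *\<^sub>C I (A \<inter> A0) a (S1 x) + complex_of_real (3/4) *\<^sub>C I (A - A0) a (S1 x))" for A a x
  define J2 where "J2 A a x = adj S2 (complex_of_real (3/4) *\<^sub>C I (A \<inter> A0) a (S2 x) + complex_of_real (1/4) *\<^sub>C I (A - A0) a (S2 x))" for A a x
  have J1u: "ucp_instrument M J1" unfolding J1_def
    by (rule J_ucp[OF ucp A0 onb _ _ S1 T1 TS1]) (auto simp: TT1 \<mu>_def \<nu>_def)
  have J2u: "ucp_instrument M J2" unfolding J2_def
    by (rule J_ucp[OF ucp A0 onb _ _ S2 T2 TS2]) (auto simp: TT2 \<mu>_def \<nu>_def)
  define Jf where "Jf i = (if i = (0::nat) then J1 else J2)" for i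
  define Tf where "Tf i = (if i = (0::nat) then T1 else T2)" for i
  have inv1: "invertible_op T1" unfolding invertible_op_def using T1 S1 ST1 TS1 by (intro conjI exI[of _ S1]) (auto simp: fun_eq_iff)
  have inv2: "invertible_op T2" unfolding invertible_op_def using T2 S2 ST2 TS2 by (intro conjI exI[of _ S2]) (auto simp: fun_eq_iff)
  have h1: "\<forall>i<2. ucp_instrument M (Jf i) \<and> invertible_op (Tf i)"
    using J1u J2u inv1 inv2 by (auto simp: Jf_def Tf_def less_2_cases_iff)
  have h2: "\<forall>x. (\<Sum>i<2. adj (Tf i) (Tf i x)) = x"
  proof
    fix x
    have "(\<Sum>i<2. adj (Tf i) (Tf i x)) = adj T1 (T1 x) + adj T2 (T2 x)"
      by (simp add: Tf_def numeral_2_eq_2)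
    also have "\<dots> = (complex_of_real (1/4) + complex_of_real (3/4)) *\<^sub>C \<mu> x + (complex_of_real (3/4) + complex_of_real (1/4)) *\<^sub>C \<nu> x"
      unfolding TT1 TT2 by (simp only: cscale_add_left add_ac)
    also have "\<dots> = \<mu> x + \<nu> x"
    proof -
      have "complex_of_real (1/4) + complex_of_real (3/4) = 1" by simp
      moreover have "complex_of_real (3/4) + complex_of_real (1/4) = 1" by simp
      ultimately show ?thesis by (simp only: cscale_one)
    qed
    finally show "(\<Sum>i<2. adj (Tf i) (Tf i x)) = x" using munu by simp
  qed
  have h3x: "I A a x = (\<Sum>i<2. adj (Tf i) (Jf i A a (Tf i x)))" if A: "A \<in> sets M" for A a x
  proof -
    have A1: "A \<inter> A0 \<in> sets M" using A A0 by auto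
    have A2: "A - A0 \<in> sets M" using A A0 by auto
    have "(\<Sum>i<2. adj (Tf i) (Jf i A a (Tf i x))) = adj T1 (J1 A a (T1 x)) + adj T2 (J2 A a (T2 x))"
      by (simp add: Tf_def Jf_def numeral_2_eq_2)
    also have "adj T1 (J1 A a (T1 x)) = complex_of_real (1/4) *\<^sub>C I (A \<inter> A0) a x + complex_of_real (3/4) *\<^sub>C I (A - A0) a x"
      unfolding J1_def by (simp add: ST1 adj_inv[OF S1 T1 ST1])
    also have "adj T2 (J2 A a (T2 x)) = complex_of_real (3/4) *\<^sub>C I (A \<inter> A0) a x + complex_of_real (1/4) *\<^sub>C I (A - A0) a x"
      unfolding J2_def by (simp add: ST2 adj_inv[OF S2 T2 ST2])
    also have "complex_of_real (1/4) *\<^sub>C I (A \<inter> A0) a x + complex_of_real (3/4) *\<^sub>C I (A - A0) a x +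
        (complex_of_real (3/4) *\<^sub>C I (A \<inter> A0) a x + complex_of_real (1/4) *\<^sub>C I (A - A0) a x)
        = (complex_of_real (1/4) + complex_of_real (3/4)) *\<^sub>C I (A \<inter> A0) a x + (complex_of_real (3/4) + complex_of_real (1/4)) *\<^sub>C I (A - A0) a x"
      by (simp only: cscale_add_left add_ac)
    also have "\<dots> = I (A \<inter> A0) a x + I (A - A0) a x"
    proof -
      have "complex_of_real (1/4) + complex_of_real (3/4) = 1" by simp
      moreover have "complex_of_real (3/4) + complex_of_real (1/4) = 1" by simp
      ultimately show ?thesis by (simp only: cscale_one)
    qed
    also have "\<dots> = I ((A \<inter> A0) \<union> (A - A0)) a x" by (rule I_add[OF ucp A1 A2, symmetric]) auto
    also have "(A \<inter> A0) \<union> (A - A0) = A" by auto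
    finally show "I A a x = (\<Sum>i<2. adj (Tf i) (Jf i A a (Tf i x)))" by simp
  qed
  have h3: "\<forall>A\<in>sets M. \<forall>a. I A a = (\<lambda>x. \<Sum>i<2. adj (Tf i) (Jf i A a (Tf i x)))"
    using h3x by (simp add: fun_eq_iff)
  obtain U where U: "\<forall>i<2. unitary_op (U i) \<and> (\<forall>A\<in>sets M. \<forall>a. Jf i A a = adj (U i) \<circ> I A a \<circ> U i)"
    using ext h1 h2 h3 unfolding cstar_extreme_instrument_def by blast
  define U0 where "U0 = U 0"
  have U0': "unitary_op (U 0) \<and> (\<forall>A\<in>sets M. \<forall>a. Jf 0 A a = adj (U 0) \<circ> I A a \<circ> U 0)"
    using U by simp
  have Uu: "unitary_op U0" using U0' unfolding U0_def by blast
  have "\<forall>A\<in>sets M. \<forall>a. J1 A a = adj U0 \<circ> I A a \<circ> U0" using U0' unfolding U0_def Jf_def by simp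
  then have UJ: "J1 A0 1 = adj U0 \<circ> \<mu> \<circ> U0" using A0 unfolding \<mu>_def by blast
  have U0b: "bounded_clinear U0" and UU: "\<And>x. U0 (adj U0 x) = x"
    using Uu unfolding unitary_op_def by (auto simp: fun_eq_iff)
  have key: "adj S1 (complex_of_real (1/4) *\<^sub>C \<mu> (S1 x)) = adj U0 (\<mu> (U0 x))" for x
  proof -
    have "J1 A0 1 x = adj S1 (complex_of_real (1/4) *\<^sub>C \<mu> (S1 x))"
      unfolding J1_def \<mu>_def by (simp add: I_empty[OF ucp])
    then show ?thesis using UJ by (simp add: fun_eq_iff)
  qed
  have aS1: "clinear (adj S1)" by (rule adj_clinear[OF S1])
  have aU0: "clinear (adj U0)" by (rule adj_clinear[OF U0b])
  have lS1: "clinear S1" and lT1: "clinear T1" and lU0: "clinear U0"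
    using S1 T1 U0b by (auto simp: bounded_clinear_def)
  have comp_lin: "clinear (f \<circ> g)" if "clinear f" "clinear g" for f g :: "'h \<Rightarrow> 'h"
    using that by (simp add: clinear_def)
  define G1 where "G1 x = complex_of_real (1/4) *\<^sub>C \<mu> x + complex_of_real (3/4) *\<^sub>C \<nu> x" for x
  have G1l: "clinear G1" unfolding clinear_def G1_def
    by (simp add: clinear_add[OF mul] clinear_add[OF nul] clinear_scale[OF mul] clinear_scale[OF nul]
        cscale_add_right cscale_cscale mult.commute add_ac)
  have G1inv: "G1 (S1 (adj S1 x)) = x" for x
    unfolding G1_def TT1[symmetric] by (simp add: TS1 adj_inv[OF S1 T1 ST1])
  define X1 where "X1 y = complex_of_real (1/4) *\<^sub>C \<mu> (S1 y)" for y
  define X2 where "X2 y = \<mu> (G1 (S1 y))" for y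
  have X1l: "clinear X1" unfolding clinear_def X1_def
    by (simp add: clinear_add[OF lS1] clinear_scale[OF lS1] clinear_add[OF mul] clinear_scale[OF mul]
        cscale_add_right cscale_cscale mult.commute)
  have X2l: "clinear X2" unfolding X2_def using comp_lin[OF mul comp_lin[OF G1l lS1]] by (simp add: comp_def)
  have "tr n e (adj S1 \<circ> X1) = tr n e (adj U0 \<circ> (\<mu> \<circ> U0))"
    using key by (intro tr_cong) (simp add: X1_def)
  also have "\<dots> = tr n e ((\<mu> \<circ> U0) \<circ> adj U0)" by (rule tr_comm[OF onb aU0 comp_lin[OF mul lU0]])
  also have "\<dots> = tr n e \<mu>" by (rule tr_cong) (simp add: UU)
  also have "\<dots> = tr n e (X2 \<circ> adj S1)" by (rule tr_cong) (simp add: X2_def G1inv)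
  also have "\<dots> = tr n e (adj S1 \<circ> X2)" by (rule tr_comm[OF onb X2l aS1])
  finally have tr_eq: "tr n e (adj S1 \<circ> X1) = tr n e (adj S1 \<circ> X2)" .
  define P where "P y = \<mu> y - \<mu> (\<mu> y)" for y
  have Pl: "clinear P" unfolding clinear_def P_def
    by (simp add: clinear_add[OF mul] clinear_scale[OF mul] cscale_diff_right)
  have X12: "adj S1 (X1 x) - adj S1 (X2 x) = (- 1/2) *\<^sub>C adj S1 (P (S1 x))" for x
  proof -
    let ?w = "S1 x"
    have "X1 x - X2 x = complex_of_real (1/4) *\<^sub>C \<mu> ?w - \<mu> (complex_of_real (1/4) *\<^sub>C \<mu> ?w + complex_of_real (3/4) *\<^sub>C (?w - \<mu> ?w))"
      unfolding X1_def X2_def G1_def nu_eq ..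
    also have "\<dots> = complex_of_real (1/4) *\<^sub>C \<mu> ?w - (complex_of_real (1/4) *\<^sub>C \<mu> (\<mu> ?w) + complex_of_real (3/4) *\<^sub>C (\<mu> ?w - \<mu> (\<mu> ?w)))"
      by (simp add: clinear_add[OF mul] clinear_scale[OF mul] clinear_diff[OF mul])
    also have "\<dots> = (- 1/2) *\<^sub>C P ?w"
    proof -
      have "(- 1/2 :: complex) = complex_of_real (1/4) - complex_of_real (3/4)" by simp
      then show ?thesis unfolding P_def
        by (simp only: cscale_diff_left cscale_diff_right) (simp add: algebra_simps)
    qed
    finally have "X1 x - X2 x = (- 1/2) *\<^sub>C P ?w" .
    then show ?thesis by (simp add: clinear_diff[OF aS1, symmetric] clinear_scale[OF aS1, symmetric])
  qed
  have "tr n e (adj S1 \<circ> X1) - tr n e (adj S1 \<circ> X2) = tr n e (\<lambda>x. (- 1/2) *\<^sub>C adj S1 (P (S1 x)))"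
    by (simp add: tr_diff[symmetric] X12 comp_def)
  also have "\<dots> = (- 1/2) * tr n e (\<lambda>x. adj S1 (P (S1 x)))" by (rule tr_scale)
  finally have "tr n e (\<lambda>x. adj S1 (P (S1 x))) = 0" using tr_eq by simp
  then have trz: "(\<Sum>i<n. cinner (S1 (e i)) (P (S1 (e i)))) = 0"
    unfolding tr_def by (simp add: adj_prop[OF S1, symmetric])
  have Pim: "Im (cinner z (P z)) = 0" for z
  proof -
    have "cinner z (P z) = cinner z (\<mu> z) - cinner (\<mu> z) (\<mu> z)"
      unfolding P_def by (simp add: cinner_diff_right muh')
    then show ?thesis using muim[of z] by simp
  qed
  have Pre: "0 \<le> Re (cinner z (P z))" for z
  proof -
    define a where "a = Re (cinner (\<mu> z) (\<mu> z))"
    have a0: "0 \<le> a" unfolding a_def by (rule cinner_self_Re_nonneg)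
    have Pz: "Re (cinner z (P z)) = Re (cinner z (\<mu> z)) - a"
      unfolding P_def a_def by (simp add: cinner_diff_right muh')
    have cs: "(cmod (cinner (\<mu> z) (\<mu> z)))^2 \<le> Re (cinner (\<mu> z) (\<mu> (\<mu> z))) * Re (cinner z (\<mu> z))"
      by (rule psd_cs[OF mul muim mure])
    have "Re (cinner (\<mu> z) (\<mu> (\<mu> z))) \<le> a"
    proof -
      have "cinner (\<mu> z) (\<mu> z) = cinner (\<mu> z) (\<mu> (\<mu> z) + \<nu> (\<mu> z))" by (simp add: munu)
      also have "\<dots> = cinner (\<mu> z) (\<mu> (\<mu> z)) + cinner (\<mu> z) (\<nu> (\<mu> z))" by (rule cinner_add_right)
      finally have "Re (cinner (\<mu> z) (\<mu> z)) = Re (cinner (\<mu> z) (\<mu> (\<mu> z))) + Re (cinner (\<mu> z) (\<nu> (\<mu> z)))" by simp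
      then show ?thesis unfolding a_def using nure[of "\<mu> z"] by linarith
    qed
    moreover have "cmod (cinner (\<mu> z) (\<mu> z)) = a"
      unfolding a_def using cinner_self_real[of "\<mu> z"] cinner_self_Re_nonneg[of "\<mu> z"] by (metis norm_of_real abs_of_nonneg)
    ultimately have "a^2 \<le> a * Re (cinner z (\<mu> z))"
      using cs mure[of z] by (metis mult_right_mono order_trans)
    then have "a \<le> Re (cinner z (\<mu> z))" using a0 mure[of z]
      by (cases "a = 0") (auto simp: power2_eq_square)
    then show ?thesis using Pz by simp
  qed
  have Pzero_base: "P (S1 (e i)) = 0" if i: "i < n" for i
  proof -
    have terms: "Re (cinner (S1 (e j)) (P (S1 (e j)))) = 0" if "j \<in> {..<n}" for j
    proof -
      have "(\<Sum>j<n. Re (cinner (S1 (e j)) (P (S1 (e j))))) = 0" using trz by (metis Re_sum zero_complex.sel(1))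
      moreover have "\<forall>j\<in>{..<n}. 0 \<le> Re (cinner (S1 (e j)) (P (S1 (e j))))" using Pre by blast
      ultimately show ?thesis using that
        sum_nonneg_eq_0_iff[of "{..<n}" "\<lambda>j. Re (cinner (S1 (e j)) (P (S1 (e j))))"] by auto
    qed
    let ?y = "S1 (e i)"
    have "Re (cinner ?y (P ?y)) = 0" using terms i by simp
    then have "(cmod (cinner (P ?y) (P ?y)))^2 \<le> 0"
      using psd_cs[OF Pl Pim Pre, of "P ?y" ?y] by simp
    then have "cinner (P ?y) (P ?y) = 0" by simp
    then show ?thesis using cinner_zero_iff by blast
  qed
  have Pz: "P y = 0" for y
  proof -
    have "y = S1 (T1 y)" by (simp add: ST1)
    also have "T1 y = (\<Sum>k<n. cinner (e k) (T1 y) *\<^sub>C e k)" by (rule exp)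
    finally have yeq: "y = (\<Sum>k<n. cinner (e k) (T1 y) *\<^sub>C S1 (e k))"
      by (simp add: clinear_sum[OF lS1] clinear_scale[OF lS1])
    have "P y = P (\<Sum>k<n. cinner (e k) (T1 y) *\<^sub>C S1 (e k))" by (rule arg_cong[OF yeq])
    also have "\<dots> = (\<Sum>k<n. cinner (e k) (T1 y) *\<^sub>C P (S1 (e k)))"
      by (simp add: clinear_sum[OF Pl] clinear_scale[OF Pl])
    also have "\<dots> = 0" using Pzero_base by (intro sum.neutral) auto
    finally show ?thesis .
  qed
  have "\<mu> y - \<mu> (\<mu> y) = 0" using Pz[of y] unfolding P_def .
  then show ?thesis unfolding \<mu>_def by simp
qed



lemma lin_span_mono: "S \<subseteq> T \<Longrightarrow> lin_span S \<subseteq> lin_span T"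
  unfolding lin_span_def by blast

lemma norm_closure_mono: "S \<subseteq> T \<Longrightarrow> norm_closure S \<subseteq> norm_closure T"
  unfolding norm_closure_def by blast

theorem corollary3p30:
  fixes M :: "'x measure"
    and \<I> :: "'x set \<Rightarrow> 'a::cstar_algebra \<Rightarrow> 'h::chilbert \<Rightarrow> 'h"
    and \<pi> :: "'a \<Rightarrow> 'k::chilbert \<Rightarrow> 'k"
    and E :: "'x set \<Rightarrow> 'k \<Rightarrow> 'k"
    and V :: "'h \<Rightarrow> 'k"
  assumes "finite_dim TYPE('h)"
    and "cstar_extreme_instrument M \<I>"
    and "minimal_bi_dilation M \<I> \<pi> E V"
  shows "norm_closure (lin_span {\<pi> a (V h) | a h. True}) = UNIV"
proof -
  note fd = assms(1) and ext = assms(2)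
  have ucp: "ucp_instrument M \<I>" using ext unfolding cstar_extreme_instrument_def by blast
  have ush: "unital_star_hom \<pi>" and sm: "spectral_measure M E" and Vb: "bounded_clinear V"
    and dil: "\<And>A a. A \<in> sets M \<Longrightarrow> \<I> A a = adj V \<circ> \<pi> a \<circ> E A \<circ> V"
    and dense: "norm_closure (lin_span {\<pi> a (E A (V h)) | a A h. A \<in> sets M}) = UNIV"
    using assms(3) unfolding minimal_bi_dilation_def by blast+
  have pi1: "\<pi> 1 = id" using ush unfolding unital_star_hom_def by blast
  have Eorth: "\<And>A. A \<in> sets M \<Longrightarrow> orth_proj (E A)" and Esp: "E (space M) = id"
    using sm unfolding spectral_measure_def by blast+
  have VV: "adj V (V h) = h" for h
  proof -
    have "\<I> (space M) 1 = adj V \<circ> \<pi> 1 \<circ> E (space M) \<circ> V" by (rule dil) simp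
    then have "\<I> (space M) 1 h = adj V (V h)" by (simp add: pi1 Esp)
    then show ?thesis using ucp_unit[OF ucp] by simp
  qed
  have key: "E A (V h) = V (\<I> A 1 h)" if A: "A \<in> sets M" for A h
  proof -
    define Q where "Q = E A"
    define \<mu> where "\<mu> = \<I> A 1"
    have Qo: "orth_proj Q" unfolding Q_def by (rule Eorth[OF A])
    have Qb: "bounded_clinear Q" and Qc: "Q \<circ> Q = Q" and Qa: "adj Q = Q"
      using Qo unfolding orth_proj_def by auto
    have Qsa: "cinner (Q x) y = cinner x (Q y)" for x y using adj_prop[OF Qb, of x y] Qa by simp
    have Qi: "Q (Q x) = Q x" for x using Qc by (metis comp_apply)
    have mud: "\<mu> x = adj V (Q (V x))" for x
      using dil[OF A, of 1] unfolding \<mu>_def Q_def by (simp add: pi1)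
    have mm: "\<mu> (\<mu> x) = \<mu> x" for x unfolding \<mu>_def by (rule mu_idem[OF fd ext A])
    have Vp: "cinner (V x) w = cinner x (adj V w)" for x w by (rule adj_prop[OF Vb])
    have Vp': "cinner (adj V w) x = cinner w (V x)" for x w by (rule adj_prop'[OF Vb])
    have musa: "cinner (\<mu> x) y = cinner x (\<mu> y)" for x y
      by (simp add: mud Vp' Vp[symmetric] Qsa)
    define w where "w = Q (V h) - V (\<mu> h)"
    have t1: "cinner (Q (V h)) (Q (V h)) = cinner h (\<mu> h)"
      by (simp add: Qsa Qi Vp mud)
    have t2: "cinner (V (\<mu> h)) (Q (V h)) = cinner (\<mu> h) (\<mu> h)"
      by (simp add: Vp mud)
    have t3: "cinner (Q (V h)) (V (\<mu> h)) = cinner (\<mu> h) (\<mu> h)"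
      using t2 by (metis cinner_conj)
    have t4: "cinner (V (\<mu> h)) (V (\<mu> h)) = cinner (\<mu> h) (\<mu> h)"
      by (simp add: Vp VV)
    have t5: "cinner (\<mu> h) (\<mu> h) = cinner h (\<mu> h)"
      by (simp add: musa mm)
    have "cinner w w = 0"
      unfolding w_def by (simp add: cinner_diff_left cinner_diff_right t1 t2 t3 t4 t5)
    then have "w = 0" using cinner_zero_iff by blast
    then show ?thesis unfolding w_def Q_def \<mu>_def by simp
  qed
  have sub: "{\<pi> a (E A (V h)) | a A h. A \<in> sets M} \<subseteq> {\<pi> a (V h) | a h. True}"
  proof
    fix z assume "z \<in> {\<pi> a (E A (V h)) | a A h. A \<in> sets M}"
    then obtain a A h where z: "z = \<pi> a (E A (V h))" and A: "A \<in> sets M" by blast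
    have "z = \<pi> a (V (\<I> A 1 h))" using z key[OF A] by simp
    then show "z \<in> {\<pi> a (V h) | a h. True}" by blast
  qed
  have "UNIV \<subseteq> norm_closure (lin_span {\<pi> a (V h) | a h. True})"
    using norm_closure_mono[OF lin_span_mono[OF sub]] dense by simp
  then show ?thesis by blast
qed


end
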